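(* Let $\mathbf{X}\subseteq\mathbb{R}^d$ and fix a time step $k$. Assume: (i) the posterior multi-target process $\Phi_{k-1}$ is an i.i.d. process with cardinality distribution $\rho_{k-1}$ and spatial (probability) distribution $s_{k-1}$, hence with intensity measure $\mu_{k-1}(\cdot)=\big(\sum_{m\ge 0} m\rho_{k-1}(m)\big)s_{k-1}(\cdot)$; (ii) the predicted process is $\Phi_{k|k-1}=\bigcup_{x\in\Phi_{k-1}}\big(\Phi_{\mathrm{s}}(x)\cup\Phi_{\mathrm{b}}(x)\big)$, where, conditionally on $\Phi_{k-1}$, all the processes $\Phi_{\mathrm{s}}(x),\Phi_{\mathrm{b}}(x)$ ($x\in\Phi_{k-1}$) are mutually independent; equivalently the PGFL of $\Phi_{k|k-1}$ is $G_{k|k-1}(h)=G_{k-1}\big(G_{\mathrm{s}}(h|\cdot)\,G_{\mathrm{b}}(h|\cdot)\big)$; (iii) the survival process $\Phi_{\mathrm{s}}(x)$ is a Bernoulli process with parameter $p_{\mathrm{s},k}(x)$ and spatial distribution given by a Markov kernel $f_{\mathrm{s},k}(\cdot|x)$; (iv) there is no spontaneous birth; (v) the spawning process $\Phi_{\mathrm{b}}(x)$ is a zero-inflated Poisson process with parameter $p_{\mathrm{b},k}(x)\in[0,1]$, rate $\lambda_{\mathrm{b},k}(x)\ge0$ and spatial distribution given by a Markov kernel $s_{\mathrm{b},k}(\cdot|x)$. Write $\bar p_{\mathrm{s},k}=1-p_{\mathrm{s},k}$, $\bar p_{\mathrm{b},k}=1-p_{\mathrm{b},k}$, and abbreviate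 $p_{\mathrm{s}}=p_{\mathrm{s},k}(x)$, $p_{\mathrm{b}}=p_{\mathrm{b},k}(x)$, $\lambda=\lambda_{\mathrm{b},k}(x)$ inside integrals. Then the intensity measure of $\Phi_{k|k-1}$ is $$\mu_{k|k-1}(B)=\int\big[p_{\mathrm{s},k}(x)f_{\mathrm{s},k}(B|x)+p_{\mathrm{b},k}(x)\lambda_{\mathrm{b},k}(x)s_{\mathrm{b},k}(B|x)\big]\mu_{k-1}(\mathrm{d}x)$$ for every Borel $B\subseteq\mathbf{X}$, and its cardinality distribution is, for every $n\ge 0$, $$\rho_{k|k-1}(n)=\sum_{j=0}^{n}B_{n,j}(b_1,\ldots,b_{n})\sum_{m\ge j}\frac{m!}{n!\,(m-j)!}\rho_{k-1}(m)\,b_0^{\,m-j},$$ where $b_0=\int \bar p_{\mathrm{s}}\big[\bar p_{\mathrm{b}}+p_{\mathrm{b}}e^{-\lambda}\big]s_{k-1}(\mathrm{d}x)$, $b_1=\int\big[\bar p_{\mathrm{s}}\,p_{\mathrm{b}}e^{-\lambda}\lambda+p_{\mathrm{s}}\big(\bar p_{\mathrm{b}}+p_{\mathrm{b}}e^{-\lambda}\big)\big]s_{k-1}(\mathrm{d}x)$, and for $i\ge2$, $b_i=\int p_{\mathrm{b}}\lambda^{i-1}e^{-\lambda}\big[\bar p_{\mathrm{s}}\lambda+i\,p_{\mathrm{s}}\big]s_{k-1}(\mathrm{d}x)$.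
   Context: A point process on $\mathbf{X}$ is a random finite collection of points of $\mathbf{X}$ (all point processes here are simple). Its cardinality distribution $\rho(n)$ is the probability that it has exactly $n$ points; its intensity measure is $\mu(B)=\mathbb{E}[\text{number of points in }B]$. Its probability generating functional (PGFL) is $G(h)=\mathbb{E}\big[\prod_{x\in\Phi}h(x)\big]$ for measurable $h:\mathbf{X}\to\mathbb{R}$ with $\|h\|_\infty\le 1$. An i.i.d. process with cardinality distribution $\rho$ and spatial probability distribution $s$ has $n$ points with probability $\rho(n)$, the points being i.i.d. with law $s$ given $n$. A Bernoulli process with parameter $p\in[0,1]$ and spatial distribution $s$ is empty with probability $1-p$ and otherwise consists of a single point with law $s$. A zero-inflated Poisson process with parameter $p\in[0,1]$, rate $\lambda\ge0$ and spatial distribution $s$ is the i.i.d. process with spatial distribution $s$ and cardinality distribution $\rho(0)=1-p+pe^{-\lambda}$, $\rho(n)=pe^{-\lambda}\lambda^n/n!$ for $n\ge1$ (i.e. with probability $1-p$ empty, otherwise Poisson with rate $\lambda$). The partial Bell polynomial is $$B_{n,j}(x_1,\ldots,x_n)=\sum\frac{n!}{k_1!(1!)^{k_1}k_2!(2!)^{k_2}\cdots k_n!(n!)^{k_n}}x_1^{k_1}\cdots x_n^{k_n},$$ the sum over nonnegative integers $k_1,\ldots,k_n$ with $k_1+2k_2+\cdots+nk_n=n$ and $k_1+\cdots+k_n=j$; by convention $B_{0,0}=1$ and $B_{n,0}=0$ for $n\ge1$. *)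

theory Defs
  imports "HOL-Probability.Probability"
begin

text \<open>A finite point configuration in the state space (measurable space) X is a finite
multiset of points of X (multiplicities allowed; the processes considered are simple
a.s. whenever the spatial laws are diffuse).\<close>

definition cnt :: "'a set \<Rightarrow> 'a multiset \<Rightarrow> nat" where
  "cnt B M = size (filter_mset (\<lambda>x. x \<in> B) M)"

definition cfg_space :: "'a measure \<Rightarrow> 'a multiset set" where
  "cfg_space X = {M. set_mset M \<subseteq> space X}"

definition cfgM :: "'a measure \<Rightarrow> 'a multiset measure" where
  "cfgM X = sigma (cfg_space X)
     {{M \<in> cfg_space X. cnt B M = n} | B n. B \<in> sets X}"

definition point_process :: "'a measure \<Rightarrow> 'a multiset measure \<Rightarrow> bool" where
  "point_process X P \<longleftrightarrow> prob_space P \<and> sets P = sets (cfgM X)"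

definition pgfl :: "'a multiset measure \<Rightarrow> ('a \<Rightarrow> real) \<Rightarrow> real" where
  "pgfl P h = (\<integral>M. prod_mset (image_mset h M) \<partial>P)"

definition intensity :: "'a multiset measure \<Rightarrow> 'a set \<Rightarrow> ennreal" where
  "intensity P B = (\<integral>\<^sup>+M. of_nat (cnt B M) \<partial>P)"

definition card_dist :: "'a multiset measure \<Rightarrow> nat \<Rightarrow> real" where
  "card_dist P n = measure P {M \<in> space P. size M = n}"

definition iid_law :: "'a measure \<Rightarrow> nat pmf \<Rightarrow> 'a measure \<Rightarrow> 'a multiset measure" where
  "iid_law X rho s = measure_pmf rho \<bind>
     (\<lambda>n. distr (PiM {..<n} (\<lambda>_. s)) (cfgM X) (\<lambda>f. mset (map f [0..<n])))"

definition bernoulli_law :: "'a measure \<Rightarrow> real \<Rightarrow> 'a measure \<Rightarrow> 'a multiset measure" where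
  "bernoulli_law X p s = measure_pmf (bernoulli_pmf p) \<bind>
     (\<lambda>b. if b then distr s (cfgM X) (\<lambda>x. {#x#}) else return (cfgM X) {#})"

definition zip_pmf :: "real \<Rightarrow> real \<Rightarrow> nat pmf" where
  "zip_pmf p lam = embed_pmf (\<lambda>n. if n = 0 then 1 - p + p * exp (- lam)
                                   else p * exp (- lam) * lam ^ n / fact n)"

definition zip_law :: "'a measure \<Rightarrow> real \<Rightarrow> real \<Rightarrow> 'a measure \<Rightarrow> 'a multiset measure" where
  "zip_law X p lam s = iid_law X (zip_pmf p lam) s"

definition bell_partial :: "nat \<Rightarrow> nat \<Rightarrow> (nat \<Rightarrow> real) \<Rightarrow> real" where
  "bell_partial n j x =
     (\<Sum>k \<in> {k. (\<forall>i. i \<notin> {1..n} \<longrightarrow> k i = 0) \<and> (\<forall>i. k i \<le> n) \<and>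
                (\<Sum>i=1..n. i * k i) = n \<and> (\<Sum>i=1..n. k i) = j}.
        fact n / (\<Prod>i=1..n. fact (k i) * fact i ^ k i) * (\<Prod>i=1..n. x i ^ k i))"

end

theory Submission
  imports Defs "HOL-Computational_Algebra.Formal_Power_Series"
begin


lemma gens_sub: "{{M \<in> cfg_space X. cnt B M = n} | B n. B \<in> sets X} \<subseteq> Pow (cfg_space X)"
  by auto

lemma space_cfgM[simp]: "space (cfgM X) = cfg_space X"
  unfolding cfgM_def by (rule space_measure_of[OF gens_sub])

lemma sets_cfgM: "sets (cfgM X) = sigma_sets (cfg_space X) {{M \<in> cfg_space X. cnt B M = n} | B n. B \<in> sets X}"
  unfolding cfgM_def by (rule sets_measure_of[OF gens_sub])

lemma gen_in_sets: "B \<in> sets X \<Longrightarrow> {M \<in> cfg_space X. cnt B M = n} \<in> sets (cfgM X)"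
  unfolding sets_cfgM by (rule sigma_sets.Basic) blast

lemma cnt_meas[measurable]: "B \<in> sets X \<Longrightarrow> cnt B \<in> cfgM X \<rightarrow>\<^sub>M count_space UNIV"
proof (subst measurable_count_space_eq2_countable, intro conjI ballI)
  assume B: "B \<in> sets X"
  show "cnt B \<in> space (cfgM X) \<rightarrow> UNIV" by simp
  fix n
  have eq: "cnt B -` {n} \<inter> space (cfgM X) = {M \<in> cfg_space X. cnt B M = n}" by auto
  show "cnt B -` {n} \<inter> space (cfgM X) \<in> sets (cfgM X)"
    unfolding eq using B by (rule gen_in_sets)
qed

lemma cnt_empty[simp]: "cnt B {#} = 0" by (simp add: cnt_def)
lemma cnt_add[simp]: "cnt B (add_mset x M) = cnt B M + (if x \<in> B then 1 else 0)"
  by (simp add: cnt_def)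

lemma prod_simple_eq:
  assumes fin: "finite (f ` space X)"
  shows "set_mset M \<subseteq> space X \<Longrightarrow>
     prod_mset (image_mset f M) = (\<Prod>v\<in>f ` space X. v ^ cnt (f -` {v} \<inter> space X) M)"
proof (induction M)
  case empty then show ?case by simp
next
  case (add x M)
  then have IH: "prod_mset (image_mset f M) = (\<Prod>v\<in>f ` space X. v ^ cnt (f -` {v} \<inter> space X) M)"
    and x: "x \<in> space X" by auto
  have "(\<Prod>v\<in>f ` space X. v ^ cnt (f -` {v} \<inter> space X) (add_mset x M))
      = (\<Prod>v\<in>f ` space X. v ^ cnt (f -` {v} \<inter> space X) M * (if v = f x then v else 1))"
    using x by (intro prod.cong) (auto simp: mult.commute)
  also have "\<dots> = (\<Prod>v\<in>f ` space X. v ^ cnt (f -` {v} \<inter> space X) M) * f x"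
    using fin x by (simp add: prod.distrib prod.delta')
  finally show ?case using IH by (simp add: mult.commute)
qed

lemma prod_simple_meas:
  fixes f :: "'a \<Rightarrow> real"
  assumes fin: "finite (f ` space X)" and f: "f \<in> borel_measurable X"
  shows "(\<lambda>M. prod_mset (image_mset f M)) \<in> borel_measurable (cfgM X)"
proof -
  have "(\<lambda>M. \<Prod>v\<in>f ` space X. v ^ cnt (f -` {v} \<inter> space X) M) \<in> borel_measurable (cfgM X)"
  proof (intro borel_measurable_prod)
    fix v
    have s: "f -` {v} \<inter> space X \<in> sets X" using f by measurable
    have "cnt (f -` {v} \<inter> space X) \<in> cfgM X \<rightarrow>\<^sub>M count_space UNIV" using s by (rule cnt_meas)
    then show "(\<lambda>M. v ^ cnt (f -` {v} \<inter> space X) M) \<in> borel_measurable (cfgM X)"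
      by (rule measurable_compose) simp
  qed
  then show ?thesis
    by (rule measurable_cong[THEN iffD1, rotated])
       (simp add: prod_simple_eq[OF fin] cfg_space_def)
qed

lemma tendsto_prod_mset_image:
  fixes F :: "nat \<Rightarrow> 'a \<Rightarrow> real"
  shows "(\<And>x. x \<in> set_mset M \<Longrightarrow> (\<lambda>k. F k x) \<longlonglongrightarrow> G x) \<Longrightarrow>
    (\<lambda>k. prod_mset (image_mset (F k) M)) \<longlonglongrightarrow> prod_mset (image_mset G M)"
  by (induction M) (auto intro!: tendsto_mult)

lemma floor_approx: "(\<lambda>k. real_of_int \<lfloor>2^k * y\<rfloor> / 2^k) \<longlonglongrightarrow> (y::real)"
proof (rule tendsto_sandwich)
  show "\<forall>\<^sub>F k in sequentially. y - 1 / 2^k \<le> real_of_int \<lfloor>2^k * y\<rfloor> / 2^k"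
  proof (intro always_eventually allI)
    fix k :: nat
    have "2^k * y - 1 \<le> real_of_int \<lfloor>2^k * y\<rfloor>" by linarith
    then have "(2^k * y - 1) / 2^k \<le> real_of_int \<lfloor>2^k * y\<rfloor> / 2^k"
      by (intro divide_right_mono) auto
    then show "y - 1 / 2^k \<le> real_of_int \<lfloor>2^k * y\<rfloor> / 2^k"
      by (simp add: diff_divide_distrib)
  qed
  show "\<forall>\<^sub>F k in sequentially. real_of_int \<lfloor>2^k * y\<rfloor> / 2^k \<le> y"
  proof (intro always_eventually allI)
    fix k :: nat
    have "real_of_int \<lfloor>2^k * y\<rfloor> \<le> 2^k * y" by linarith
    then show "real_of_int \<lfloor>2^k * y\<rfloor> / 2^k \<le> y" by (simp add: field_simps)
  qed
  have "(\<lambda>k. 1 / (2::real)^k) \<longlonglongrightarrow> 0"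
    by (simp add: LIMSEQ_divide_realpow_zero)
  then show "(\<lambda>k. y - 1 / 2^k) \<longlonglongrightarrow> y"
    using tendsto_diff[of "\<lambda>_. y" y sequentially "\<lambda>k. 1 / (2::real)^k" 0] by simp
qed simp

lemma prod_meas:
  fixes g :: "'a \<Rightarrow> real"
  assumes g: "g \<in> borel_measurable X" and bnd: "\<And>x. x \<in> space X \<Longrightarrow> 0 \<le> g x \<and> g x \<le> 1"
  shows "(\<lambda>M. prod_mset (image_mset g M)) \<in> borel_measurable (cfgM X)"
proof (rule borel_measurable_LIMSEQ_real)
  define F where "F k x = real_of_int \<lfloor>2^k * g x\<rfloor> / 2^k" for k x
  fix k
  have "F k ` space X \<subseteq> (\<lambda>l. real_of_int l / 2^k) ` {0..2^k}"
  proof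
    fix v assume "v \<in> F k ` space X"
    then obtain x where x: "x \<in> space X" "v = F k x" by auto
    have "0 \<le> \<lfloor>2^k * g x\<rfloor>" using bnd[OF x(1)] by simp
    moreover have "\<lfloor>2^k * g x\<rfloor> \<le> 2^k"
    proof -
      have "2^k * g x \<le> 2^k" using bnd[OF x(1)] by simp
      then have "\<lfloor>2^k * g x\<rfloor> \<le> \<lfloor>(2::real)^k\<rfloor>" by (rule floor_mono)
      then show ?thesis by simp
    qed
    ultimately show "v \<in> (\<lambda>l. real_of_int l / 2^k) ` {0..2^k}"
      using x by (auto simp: F_def)
  qed
  then have "finite (F k ` space X)" by (rule finite_subset) simp
  moreover have "F k \<in> borel_measurable X" unfolding F_def using g by measurable
  ultimately show "(\<lambda>M. prod_mset (image_mset (F k) M)) \<in> borel_measurable (cfgM X)"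
    by (rule prod_simple_meas)
next
  fix M
  show "(\<lambda>k. prod_mset (image_mset (\<lambda>x. real_of_int \<lfloor>2^k * g x\<rfloor> / 2^k) M)) \<longlonglongrightarrow> prod_mset (image_mset g M)"
    by (rule tendsto_prod_mset_image) (rule floor_approx)
qed


lemma cfg_space_mset_map: "(\<And>i. i < n \<Longrightarrow> f i \<in> space X) \<Longrightarrow> mset (map f [0..<n]) \<in> cfg_space X"
  unfolding cfg_space_def mem_Collect_eq set_mset_mset set_map by auto

lemma cnt_mset_map: "real (cnt B (mset (map f [0..<n]))) = (\<Sum>i<n. indicator B (f i))"
  by (induction n) (auto simp: cnt_def indicator_def)

lemma mset_map_meas:
  assumes ss: "sets s = sets X"
  shows "(\<lambda>f. mset (map f [0..<n])) \<in> PiM {..<n} (\<lambda>_. s) \<rightarrow>\<^sub>M cfgM X"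
  unfolding cfgM_def
proof (rule measurable_measure_of[OF gens_sub])
  have sp: "space s = space X" using ss by (rule sets_eq_imp_space_eq)
  show "(\<lambda>f. mset (map f [0..<n])) \<in> space (Pi\<^sub>M {..<n} (\<lambda>_. s)) \<rightarrow> cfg_space X"
  proof (rule Pi_I)
    fix f assume "f \<in> space (Pi\<^sub>M {..<n} (\<lambda>_. s))"
    then have "\<And>i. i < n \<Longrightarrow> f i \<in> space X" using sp by (auto simp: space_PiM PiE_def Pi_def)
    then show "mset (map f [0..<n]) \<in> cfg_space X" by (rule cfg_space_mset_map)
  qed
  fix y assume "y \<in> {{M \<in> cfg_space X. cnt B M = k} | B k. B \<in> sets X}"
  then obtain B k where y: "y = {M \<in> cfg_space X. cnt B M = k}" and B: "B \<in> sets s"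
    using ss by auto
  have "(\<lambda>f. mset (map f [0..<n])) -` y \<inter> space (Pi\<^sub>M {..<n} (\<lambda>_. s))
      = {f \<in> space (Pi\<^sub>M {..<n} (\<lambda>_. s)). (\<Sum>i<n. indicator B (f i)) = (real k::real)}"
    using sp unfolding y
    by (auto simp: space_PiM PiE_def Pi_def cnt_mset_map[symmetric] simp del: mset_map mset_upt intro!: cfg_space_mset_map)
  also have "\<dots> \<in> sets (Pi\<^sub>M {..<n} (\<lambda>_. s))"
    using B by measurable
  finally show "(\<lambda>f. mset (map f [0..<n])) -` y \<inter> space (Pi\<^sub>M {..<n} (\<lambda>_. s)) \<in> sets (Pi\<^sub>M {..<n} (\<lambda>_. s))" .
qed

lemma single_meas:
  assumes ss: "sets s = sets X"
  shows "(\<lambda>x. {#x#}) \<in> s \<rightarrow>\<^sub>M cfgM X"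
  unfolding cfgM_def
proof (rule measurable_measure_of[OF gens_sub])
  have sp: "space s = space X" using ss by (rule sets_eq_imp_space_eq)
  show "(\<lambda>x. {#x#}) \<in> space s \<rightarrow> cfg_space X"
    using sp by (auto simp: cfg_space_def)
  fix y assume "y \<in> {{M \<in> cfg_space X. cnt B M = k} | B k. B \<in> sets X}"
  then obtain B k where y: "y = {M \<in> cfg_space X. cnt B M = k}" and B: "B \<in> sets s"
    using ss by auto
  have "(\<lambda>x. {#x#}) -` y \<inter> space s = {x \<in> space s. (indicator B x :: real) = real k}"
    using sp unfolding y by (auto simp: cnt_def cfg_space_def indicator_def)
  also have "\<dots> \<in> sets s" using B by measurable
  finally show "(\<lambda>x. {#x#}) -` y \<inter> space s \<in> sets s" .
qed

lemma iid_kernel: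
  assumes ps: "prob_space s" and ss: "sets s = sets X"
  shows "(\<lambda>n. distr (PiM {..<n} (\<lambda>_. s)) (cfgM X) (\<lambda>f. mset (map f [0..<n])))
     \<in> measure_pmf rho \<rightarrow>\<^sub>M subprob_algebra (cfgM X)"
proof -
  have "prob_space (distr (PiM {..<n} (\<lambda>_. s)) (cfgM X) (\<lambda>f. mset (map f [0..<n])))" for n
    by (rule prob_space.prob_space_distr[OF prob_space_PiM mset_map_meas[OF ss]]) (use ps in auto)
  then show ?thesis
    by (auto simp: space_subprob_algebra intro: prob_space_imp_subprob_space)
qed

lemma sets_iid[simp]:
  assumes ps: "prob_space s" and ss: "sets s = sets X"
  shows "sets (iid_law X rho s) = sets (cfgM X)"
  unfolding iid_law_def by (subst sets_bind) auto

lemma prod_mset_map_upt: "prod_mset (image_mset g (mset (map f [0..<n]))) = (\<Prod>i<n. g (f i))"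
  by (induction n) (auto simp: mult.commute)

lemma prod_mset_nonneg_image:
  fixes g :: "'a \<Rightarrow> real"
  shows "(\<And>x. x \<in> set_mset M \<Longrightarrow> 0 \<le> g x) \<Longrightarrow> 0 \<le> prod_mset (image_mset g M)"
  by (induction M) auto

lemma prod_mset_le1_image:
  fixes g :: "'a \<Rightarrow> real"
  shows "(\<And>x. x \<in> set_mset M \<Longrightarrow> 0 \<le> g x \<and> g x \<le> 1) \<Longrightarrow> prod_mset (image_mset g M) \<le> 1"
proof (induction M)
  case (add x M)
  then have "prod_mset (image_mset g M) \<le> 1" "0 \<le> prod_mset (image_mset g M)" "0 \<le> g x" "g x \<le> 1"
    by (auto intro!: prod_mset_nonneg_image)
  then show ?case by (simp add: mult_le_one)
qed simp

lemma product_prob_const: "prob_space s \<Longrightarrow> product_prob_space (\<lambda>_::nat. s)"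
  by (intro product_prob_space.intro product_sigma_finite.intro product_prob_space_axioms.intro)
     (auto intro: prob_space_imp_sigma_finite)

lemma nn_iid:
  fixes g :: "'a \<Rightarrow> real"
  assumes ps: "prob_space s" and ss: "sets s = sets X"
    and g: "g \<in> borel_measurable X" and bnd: "\<And>x. x \<in> space X \<Longrightarrow> 0 \<le> g x \<and> g x \<le> 1"
  shows "(\<integral>\<^sup>+M. ennreal (prod_mset (image_mset g M)) \<partial>iid_law X rho s)
       = (\<Sum>n. ennreal (pmf rho n) * (\<integral>\<^sup>+x. ennreal (g x) \<partial>s) ^ n)"
proof -
  interpret P: product_prob_space "\<lambda>_::nat. s" using ps by (rule product_prob_const)
  have sp: "space s = space X" using ss by (rule sets_eq_imp_space_eq)
  have gs: "g \<in> borel_measurable s" unfolding measurable_cong_sets[OF ss refl] by (rule g)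
  have pm: "(\<lambda>M. ennreal (prod_mset (image_mset g M))) \<in> borel_measurable (cfgM X)"
    using prod_meas[OF g bnd] by measurable
  have inner: "(\<integral>\<^sup>+M. ennreal (prod_mset (image_mset g M))
        \<partial>distr (PiM {..<n} (\<lambda>_. s)) (cfgM X) (\<lambda>f. mset (map f [0..<n])))
      = (\<integral>\<^sup>+x. ennreal (g x) \<partial>s) ^ n" for n
  proof -
    have "(\<integral>\<^sup>+M. ennreal (prod_mset (image_mset g M))
        \<partial>distr (PiM {..<n} (\<lambda>_. s)) (cfgM X) (\<lambda>f. mset (map f [0..<n])))
      = (\<integral>\<^sup>+f. ennreal (prod_mset (image_mset g (mset (map f [0..<n])))) \<partial>PiM {..<n} (\<lambda>_. s))"
      by (rule nn_integral_distr[OF mset_map_meas[OF ss]])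
         (subst measurable_cong_sets[OF sets_distr refl], rule pm)
    also have "\<dots> = (\<integral>\<^sup>+f. (\<Prod>i\<in>{..<n}. ennreal (g (f i))) \<partial>PiM {..<n} (\<lambda>_. s))"
    proof (rule nn_integral_cong)
      fix f assume f: "f \<in> space (PiM {..<n} (\<lambda>_. s))"
      then have "\<And>i. i < n \<Longrightarrow> 0 \<le> g (f i)" using bnd sp by (auto simp: space_PiM PiE_def Pi_def)
      then show "ennreal (prod_mset (image_mset g (mset (map f [0..<n])))) = (\<Prod>i\<in>{..<n}. ennreal (g (f i)))"
        by (subst prod_ennreal) (auto simp: prod_mset_map_upt simp del: mset_map mset_upt)
    qed
    also have "\<dots> = (\<Prod>i\<in>{..<n}. \<integral>\<^sup>+x. ennreal (g x) \<partial>s)"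
      by (rule P.product_nn_integral_prod) (use gs in auto)
    finally show ?thesis by simp
  qed
  show ?thesis
    unfolding iid_law_def
    apply (subst nn_integral_bind[OF pm iid_kernel[OF ps ss]])
    apply (subst nn_integral_measure_pmf)
    apply (subst nn_integral_count_space_nat)
    apply (simp only: inner)
    done
qed


lemma pgfl_nn:
  fixes g :: "'a \<Rightarrow> real"
  assumes sP: "sets P = sets (cfgM X)"
    and g: "g \<in> borel_measurable X" and bnd: "\<And>x. x \<in> space X \<Longrightarrow> 0 \<le> g x \<and> g x \<le> 1"
  shows "pgfl P g = enn2real (\<integral>\<^sup>+M. ennreal (prod_mset (image_mset g M)) \<partial>P)"
  unfolding pgfl_def
proof (rule integral_eq_nn_integral)
  show "(\<lambda>M. prod_mset (image_mset g M)) \<in> borel_measurable P"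
    unfolding measurable_cong_sets[OF sP refl] by (rule prod_meas[OF g bnd])
  have sp: "space P = cfg_space X" using sets_eq_imp_space_eq[OF sP] by simp
  show "AE M in P. 0 \<le> prod_mset (image_mset g M)"
    by (rule AE_I2) (auto simp: sp cfg_space_def intro!: prod_mset_nonneg_image dest: bnd)
qed

lemma pgfl_cong:
  assumes sP: "sets P = sets (cfgM X)" and eq: "\<And>x. x \<in> space X \<Longrightarrow> g x = g' x"
  shows "pgfl P g = pgfl P g'"
  unfolding pgfl_def
proof (rule Bochner_Integration.integral_cong[OF refl])
  fix M assume "M \<in> space P"
  then have "set_mset M \<subseteq> space X" using sets_eq_imp_space_eq[OF sP] by (simp add: cfg_space_def)
  then have "image_mset g M = image_mset g' M" by (intro image_mset_cong) (auto intro: eq)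
  then show "prod_mset (image_mset g M) = prod_mset (image_mset g' M)" by simp
qed

lemma integral_01:
  fixes g :: "'a \<Rightarrow> real"
  assumes ps: "prob_space s" and ss: "sets s = sets X"
    and g: "g \<in> borel_measurable X" and bnd: "\<And>x. x \<in> space X \<Longrightarrow> 0 \<le> g x \<and> g x \<le> 1"
  shows "integrable s g" "0 \<le> (\<integral>x. g x \<partial>s)" "(\<integral>x. g x \<partial>s) \<le> 1"
    "(\<integral>\<^sup>+x. ennreal (g x) \<partial>s) = ennreal (\<integral>x. g x \<partial>s)"
proof -
  interpret prob_space s by (rule ps)
  have sp: "space s = space X" using ss by (rule sets_eq_imp_space_eq)
  have gs: "g \<in> borel_measurable s" unfolding measurable_cong_sets[OF ss refl] by (rule g)
  have "AE x in s. norm (g x) \<le> 1"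
  proof (rule AE_I2)
    fix x assume "x \<in> space s"
    then have "0 \<le> g x \<and> g x \<le> 1" using bnd sp by auto
    then show "norm (g x) \<le> 1" by simp
  qed
  then show int: "integrable s g"
    by (rule integrable_const_bound[where B=1]) (rule gs)
  show "0 \<le> (\<integral>x. g x \<partial>s)" by (rule integral_nonneg_AE) (auto intro!: AE_I2 simp: sp dest: bnd)
  have "(\<integral>x. g x \<partial>s) \<le> (\<integral>x. 1 \<partial>s)"
    by (rule integral_mono_AE[OF int]) (auto intro!: AE_I2 simp: sp dest: bnd)
  then show "(\<integral>x. g x \<partial>s) \<le> 1" by (simp add: prob_space)
  show "(\<integral>\<^sup>+x. ennreal (g x) \<partial>s) = ennreal (\<integral>x. g x \<partial>s)"
    by (rule nn_integral_eq_integral[OF int]) (auto intro!: AE_I2 simp: sp dest: bnd)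
qed

lemma empty_in_cfg[simp]: "{#} \<in> cfg_space X" by (simp add: cfg_space_def)

lemma bern_kernel:
  assumes ps: "prob_space s" and ss: "sets s = sets X"
  shows "(\<lambda>b. if b then distr s (cfgM X) (\<lambda>x. {#x#}) else return (cfgM X) {#})
     \<in> measure_pmf q \<rightarrow>\<^sub>M subprob_algebra (cfgM X)"
proof -
  have "prob_space (distr s (cfgM X) (\<lambda>x. {#x#}))"
    by (rule prob_space.prob_space_distr[OF ps single_meas[OF ss]])
  moreover have "prob_space (return (cfgM X) {#})" by (rule prob_space_return) simp
  ultimately show ?thesis
    apply (subst measurable_pmf_measure1)
    apply (rule Pi_I)
    subgoal for b by (cases b) (auto simp: space_subprob_algebra intro: prob_space_imp_subprob_space)
    done
qed

lemma sets_bern[simp]: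
  assumes ps: "prob_space s" and ss: "sets s = sets X"
  shows "sets (bernoulli_law X p s) = sets (cfgM X)"
  unfolding bernoulli_law_def by (subst sets_bind) auto

lemma nn_bern:
  fixes g :: "'a \<Rightarrow> real"
  assumes p: "0 \<le> p" "p \<le> 1" and ps: "prob_space s" and ss: "sets s = sets X"
    and g: "g \<in> borel_measurable X" and bnd: "\<And>x. x \<in> space X \<Longrightarrow> 0 \<le> g x \<and> g x \<le> 1"
  shows "(\<integral>\<^sup>+M. ennreal (prod_mset (image_mset g M)) \<partial>bernoulli_law X p s)
       = ennreal (1 - p) + ennreal p * (\<integral>\<^sup>+x. ennreal (g x) \<partial>s)"
proof -
  have pm: "(\<lambda>M. ennreal (prod_mset (image_mset g M))) \<in> borel_measurable (cfgM X)"
    using prod_meas[OF g bnd] by measurable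
  have t: "(\<integral>\<^sup>+M. ennreal (prod_mset (image_mset g M)) \<partial>distr s (cfgM X) (\<lambda>x. {#x#}))
      = (\<integral>\<^sup>+x. ennreal (g x) \<partial>s)"
    by (subst nn_integral_distr[OF single_meas[OF ss]])
       (auto simp: measurable_cong_sets[OF sets_distr refl] pm)
  have f: "(\<integral>\<^sup>+M. ennreal (prod_mset (image_mset g M)) \<partial>return (cfgM X) {#}) = 1"
    by (subst nn_integral_return) (auto simp: pm)
  show ?thesis
    unfolding bernoulli_law_def
    apply (subst nn_integral_bind[OF pm bern_kernel[OF ps ss]])
    apply (subst nn_integral_measure_pmf)
    apply (subst nn_integral_count_space_finite)
    using p by (auto simp: UNIV_bool t f mult.commute)
qed

lemma pgfl_bern:
  fixes g :: "'a \<Rightarrow> real"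
  assumes p: "0 \<le> p" "p \<le> 1" and ps: "prob_space s" and ss: "sets s = sets X"
    and g: "g \<in> borel_measurable X" and bnd: "\<And>x. x \<in> space X \<Longrightarrow> 0 \<le> g x \<and> g x \<le> 1"
  shows "pgfl (bernoulli_law X p s) g = 1 - p + p * (\<integral>x. g x \<partial>s)"
proof -
  note I = integral_01[OF ps ss g bnd]
  have e: "ennreal (1 - p) + ennreal p * ennreal (\<integral>x. g x \<partial>s) = ennreal (1 - p + p * (\<integral>x. g x \<partial>s))"
  proof -
    have "ennreal (1 - p + p * (\<integral>x. g x \<partial>s)) = ennreal (1 - p) + ennreal (p * (\<integral>x. g x \<partial>s))"
      by (rule ennreal_plus) (use p I(2) in auto)
    also have "ennreal (p * (\<integral>x. g x \<partial>s)) = ennreal p * ennreal (\<integral>x. g x \<partial>s)"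
      by (rule ennreal_mult) (use p I(2) in auto)
    finally show ?thesis by simp
  qed
  have e2: "enn2real (ennreal (1 - p) + ennreal (p * (\<integral>x. g x \<partial>s))) = 1 - p + p * (\<integral>x. g x \<partial>s)"
  proof -
    have "ennreal (1 - p) + ennreal (p * (\<integral>x. g x \<partial>s)) = ennreal (1 - p + p * (\<integral>x. g x \<partial>s))"
      by (rule ennreal_plus[symmetric]) (use p I(2) in auto)
    moreover have "0 \<le> 1 - p + p * (\<integral>x. g x \<partial>s)" using p I(2) by simp
    ultimately show ?thesis by (simp only: enn2real_ennreal)
  qed
  have "pgfl (bernoulli_law X p s) g = enn2real (\<integral>\<^sup>+M. ennreal (prod_mset (image_mset g M)) \<partial>bernoulli_law X p s)"
    by (rule pgfl_nn[OF sets_bern[OF ps ss] g bnd])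
  also have "(\<integral>\<^sup>+M. ennreal (prod_mset (image_mset g M)) \<partial>bernoulli_law X p s) = ennreal (1 - p) + ennreal p * ennreal (\<integral>x. g x \<partial>s)"
    by (simp only: nn_bern[OF p ps ss g bnd] I(4))
  also have "\<dots> = ennreal (1 - p + p * (\<integral>x. g x \<partial>s))" by (rule e)
  also have "enn2real \<dots> = 1 - p + p * (\<integral>x. g x \<partial>s)"
    by (rule enn2real_ennreal) (use p I(2) in simp)
  finally show ?thesis .
qed

definition zf :: "real \<Rightarrow> real \<Rightarrow> nat \<Rightarrow> real" where
  "zf p lam n = (if n = 0 then 1 - p + p * exp (- lam) else p * exp (- lam) * lam ^ n / fact n)"

lemma zip_sums: "(\<lambda>n. zf p lam n * c ^ n) sums (1 - p + p * exp (- lam) * exp (lam * c))"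
proof -
  have e: "(\<lambda>n. (lam * c) ^ n / fact n) sums exp (lam * c)"
    using exp_converges[of "lam * c"] by (simp add: divide_inverse mult.commute)
  have "(\<lambda>n. (if n = 0 then 1 - p else 0) + p * exp (- lam) * ((lam * c) ^ n / fact n))
      sums ((1 - p) + p * exp (- lam) * exp (lam * c))"
    by (intro sums_add sums_mult e) (rule sums_single[where f="\<lambda>_. 1 - p" and i=0])
  moreover have "(\<lambda>n. (if n = 0 then 1 - p else 0) + p * exp (- lam) * ((lam * c) ^ n / fact n))
      = (\<lambda>n. zf p lam n * c ^ n)"
    by (auto simp: zf_def power_mult_distrib)
  ultimately show ?thesis by simp
qed

lemma zf_nonneg: "0 \<le> p \<Longrightarrow> p \<le> 1 \<Longrightarrow> 0 \<le> lam \<Longrightarrow> 0 \<le> zf p lam n"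
  by (auto simp: zf_def intro: add_nonneg_nonneg)

lemma pmf_zip:
  assumes "0 \<le> p" "p \<le> 1" "0 \<le> lam"
  shows "pmf (zip_pmf p lam) n = zf p lam n"
proof -
  have eq: "zip_pmf p lam = embed_pmf (zf p lam)"
    unfolding zip_pmf_def zf_def ..
  have s1: "(\<integral>\<^sup>+x. ennreal (zf p lam x) \<partial>count_space UNIV) = 1"
  proof -
    have "(\<lambda>n. zf p lam n * 1 ^ n) sums (1 - p + p * exp (- lam) * exp (lam * 1))"
      by (rule zip_sums)
    then have "(zf p lam) sums 1" by (simp add: mult.assoc exp_add[symmetric])
    then show ?thesis
      using suminf_ennreal_eq[OF zf_nonneg[OF assms]] by (simp add: nn_integral_count_space_nat)
  qed
  show ?thesis unfolding eq
    by (rule pmf_embed_pmf) (use zf_nonneg assms s1 in auto)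
qed

lemma pmf_summable: "summable (\<lambda>n. pmf rho (n::nat))"
proof -
  have "(\<integral>\<^sup>+x. 1 \<partial>measure_pmf rho) = \<integral>\<^sup>+x. ennreal (pmf rho x) * 1 \<partial>count_space UNIV"
    by (rule nn_integral_measure_pmf)
  then have "(\<Sum>n. ennreal (pmf rho n)) = 1"
    by (simp add: nn_integral_count_space_nat measure_pmf.emeasure_space_1)
  then show ?thesis by (intro summable_suminf_not_top) auto
qed

lemma pgfl_iid_real:
  fixes g :: "'a \<Rightarrow> real"
  assumes ps: "prob_space s" and ss: "sets s = sets X"
    and g: "g \<in> borel_measurable X" and bnd: "\<And>x. x \<in> space X \<Longrightarrow> 0 \<le> g x \<and> g x \<le> 1"
  shows "summable (\<lambda>n. pmf rho n * (\<integral>x. g x \<partial>s) ^ n)"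
    "pgfl (iid_law X rho s) g = (\<Sum>n. pmf rho n * (\<integral>x. g x \<partial>s) ^ n)"
proof -
  note I = integral_01[OF ps ss g bnd]
  let ?c = "\<integral>x. g x \<partial>s"
  show sm: "summable (\<lambda>n. pmf rho n * ?c ^ n)"
  proof (rule summable_comparison_test'[OF pmf_summable])
    fix n
    have "?c ^ n \<le> 1" using I by (simp add: power_le_one)
    then show "norm (pmf rho n * ?c ^ n) \<le> pmf rho n"
      using I by (simp add: mult_left_le)
  qed
  have "pgfl (iid_law X rho s) g = enn2real (\<Sum>n. ennreal (pmf rho n) * ennreal ?c ^ n)"
    by (simp add: pgfl_nn[OF sets_iid[OF ps ss] g bnd] nn_iid[OF ps ss g bnd] I(4))
  also have "(\<Sum>n. ennreal (pmf rho n) * ennreal ?c ^ n) = (\<Sum>n. ennreal (pmf rho n * ?c ^ n))"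
    using I by (simp add: ennreal_mult ennreal_power)
  also have "\<dots> = ennreal (\<Sum>n. pmf rho n * ?c ^ n)"
    by (rule suminf_ennreal2) (use I sm in auto)
  finally show "pgfl (iid_law X rho s) g = (\<Sum>n. pmf rho n * ?c ^ n)"
    using I by (simp add: suminf_nonneg sm)
qed

lemma pgfl_zip:
  fixes g :: "'a \<Rightarrow> real"
  assumes p: "0 \<le> p" "p \<le> 1" and lam: "0 \<le> lam" and ps: "prob_space s" and ss: "sets s = sets X"
    and g: "g \<in> borel_measurable X" and bnd: "\<And>x. x \<in> space X \<Longrightarrow> 0 \<le> g x \<and> g x \<le> 1"
  shows "pgfl (zip_law X p lam s) g = 1 - p + p * exp (- lam) * exp (lam * (\<integral>x. g x \<partial>s))"
  using pgfl_iid_real(2)[OF ps ss g bnd, of "zip_pmf p lam"] sums_unique[OF zip_sums]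
  unfolding zip_law_def by (simp add: pmf_zip[OF p lam])


definition Kset :: "nat \<Rightarrow> nat \<Rightarrow> (nat \<Rightarrow> nat) set" where
  "Kset n j = {k. (\<forall>i. i \<notin> {1..n} \<longrightarrow> k i = 0) \<and> (\<forall>i. k i \<le> n) \<and>
                (\<Sum>i=1..n. i * k i) = n \<and> (\<Sum>i=1..n. k i) = j}"

definition W :: "nat \<Rightarrow> (nat \<Rightarrow> real) \<Rightarrow> (nat \<Rightarrow> nat) \<Rightarrow> real" where
  "W N c k = (\<Prod>i=1..N. c i ^ k i / fact (k i))"

definition T :: "(nat \<Rightarrow> real) \<Rightarrow> nat \<Rightarrow> nat \<Rightarrow> real" where
  "T c n j = (\<Sum>k\<in>Kset n j. W n c k)"

lemma Kset_finite: "finite (Kset n j)"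
proof (rule finite_subset)
  show "Kset n j \<subseteq> {k. \<forall>x. (x \<in> {1..n} \<longrightarrow> k x \<in> {0..n}) \<and> (x \<notin> {1..n} \<longrightarrow> k x = 0)}"
    by (auto simp: Kset_def)
  show "finite {k. \<forall>x. (x \<in> {1..n} \<longrightarrow> k x \<in> {0..n}) \<and> (x \<notin> {1..n} \<longrightarrow> k x = 0)}"
    by (rule finite_set_of_finite_funs) auto
qed

lemma prod_term_eq:
  fixes x :: "nat \<Rightarrow> real"
  shows "(\<Prod>i\<in>A. (x i / fact i) ^ k i / fact (k i)) = (\<Prod>i\<in>A. x i ^ k i) / (\<Prod>i\<in>A. fact (k i) * fact i ^ k i)"
  by (simp add: prod_dividef[symmetric] power_divide mult.commute)

lemma bell_eq: "bell_partial n j x = fact n * T (\<lambda>i. x i / fact i) n j"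
  unfolding bell_partial_def T_def W_def Kset_def sum_distrib_left
  by (intro sum.cong refl) (simp add: prod_term_eq)

lemma W_mono:
  assumes "\<forall>i. i \<notin> {1..M} \<longrightarrow> k i = 0" "M \<le> N"
  shows "W N c k = W M c k"
  unfolding W_def by (rule prod.mono_neutral_right) (use assms in auto)

lemma W_nonneg: "(\<And>i. 0 \<le> c i) \<Longrightarrow> 0 \<le> W N c k"
  unfolding W_def by (intro prod_nonneg divide_nonneg_nonneg zero_le_power) auto

lemma sum_upd_add:
  fixes g :: "nat \<Rightarrow> nat"
  assumes "finite A" "i \<in> A"
  shows "(\<Sum>l\<in>A. g l * (k(i := k i + 1)) l) = (\<Sum>l\<in>A. g l * k l) + g i"
proof -
  have "(\<Sum>l\<in>A. g l * (k(i := k i + 1)) l) = g i * (k i + 1) + (\<Sum>l\<in>A - {i}. g l * (k(i := k i + 1)) l)"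
    using assms by (subst sum.remove[of A i]) auto
  also have "(\<Sum>l\<in>A - {i}. g l * (k(i := k i + 1)) l) = (\<Sum>l\<in>A - {i}. g l * k l)"
    by (intro sum.cong) auto
  also have "(\<Sum>l\<in>A. g l * k l) = g i * k i + (\<Sum>l\<in>A - {i}. g l * k l)"
    using assms by (subst sum.remove[of A i]) auto
  ultimately show ?thesis by (simp add: algebra_simps)
qed

lemma sum_upd_add1:
  fixes A :: "nat set" and k :: "nat \<Rightarrow> nat"
  assumes "finite A" "i \<in> A"
  shows "(\<Sum>l\<in>A. (k(i := k i + 1)) l) = (\<Sum>l\<in>A. k l) + 1"
  using sum_upd_add[OF assms, of "\<lambda>_. 1" k] by simp

lemma term_le_sum: "l \<in> {1..n} \<Longrightarrow> l * k l \<le> (\<Sum>i=1..n. i * (k i::nat))"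
  by (rule member_le_sum) auto

lemma sum_shrink:
  fixes g :: "nat \<Rightarrow> nat"
  assumes "\<forall>l. l \<notin> {1..m} \<longrightarrow> g l = 0" "m \<le> n"
  shows "(\<Sum>l=1..n. g l) = (\<Sum>l=1..m. g l)"
  by (rule sum.mono_neutral_right) (use assms in auto)

lemma inc_in:
  assumes b: "b \<in> Kset (n - i) j" and i: "i \<in> {1..n}"
  shows "b(i := b i + 1) \<in> {k \<in> Kset n (Suc j). 1 \<le> k i}"
proof -
  let ?a = "b(i := b i + 1)"
  have bs: "\<forall>l. l \<notin> {1..n - i} \<longrightarrow> b l = 0" and bw: "(\<Sum>l=1..n-i. l * b l) = n - i"
    and bc: "(\<Sum>l=1..n-i. b l) = j" using b by (auto simp: Kset_def)
  have bs': "\<forall>l. l \<notin> {1..n} \<longrightarrow> b l = 0" using bs by auto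
  have sup: "\<forall>l. l \<notin> {1..n} \<longrightarrow> ?a l = 0" using bs' i by auto
  have w: "(\<Sum>l=1..n. l * ?a l) = n"
  proof -
    have "(\<Sum>l=1..n. l * ?a l) = (\<Sum>l=1..n. l * b l) + i"
      using sum_upd_add[of "{1..n}" i "\<lambda>l. l" b] i by simp
    also have "(\<Sum>l=1..n. l * b l) = (\<Sum>l=1..n-i. l * b l)"
      by (rule sum_shrink) (use bs in auto)
    finally show ?thesis using bw i by simp
  qed
  have c: "(\<Sum>l=1..n. ?a l) = Suc j"
  proof -
    have "(\<Sum>l=1..n. ?a l) = (\<Sum>l=1..n. b l) + 1"
      using sum_upd_add1[of "{1..n}" i b] i by simp
    also have "(\<Sum>l=1..n. b l) = (\<Sum>l=1..n-i. b l)"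
      by (rule sum_shrink) (use bs in auto)
    finally show ?thesis using bc by simp
  qed
  have le: "\<forall>l. ?a l \<le> n"
  proof
    fix l
    show "?a l \<le> n"
    proof (cases "l \<in> {1..n}")
      case True
      then have "l * ?a l \<le> n" using term_le_sum[OF True, of ?a] w by simp
      moreover have "?a l \<le> l * ?a l" using True by simp
      ultimately show ?thesis by linarith
    next
      case False then show ?thesis using sup by simp
    qed
  qed
  show ?thesis using sup le w c by (simp add: Kset_def)
qed

lemma dec_in:
  assumes a: "a \<in> {k \<in> Kset n (Suc j). 1 \<le> k i}" and i: "i \<in> {1..n}"
  shows "a(i := a i - 1) \<in> Kset (n - i) j"
proof -
  let ?d = "a(i := a i - 1)"
  have as: "\<forall>l. l \<notin> {1..n} \<longrightarrow> a l = 0" and aw: "(\<Sum>l=1..n. l * a l) = n"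
    and ac: "(\<Sum>l=1..n. a l) = Suc j" and ai: "1 \<le> a i" using a by (auto simp: Kset_def)
  have aeq: "?d(i := ?d i + 1) = a" using ai by (auto simp: fun_eq_iff)
  have dw: "(\<Sum>l=1..n. l * ?d l) = n - i"
  proof -
    have "(\<Sum>l=1..n. l * a l) = (\<Sum>l=1..n. l * ?d l) + i"
      using sum_upd_add[of "{1..n}" i "\<lambda>l. l" ?d, unfolded aeq] i by simp
    then show ?thesis using aw by simp
  qed
  have dc: "(\<Sum>l=1..n. ?d l) = j"
  proof -
    have "(\<Sum>l=1..n. a l) = (\<Sum>l=1..n. ?d l) + 1"
      using sum_upd_add1[of "{1..n}" i ?d, unfolded aeq] i by simp
    then show ?thesis using ac by simp
  qed
  have bnd: "l * ?d l \<le> n - i" if "l \<in> {1..n}" for l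
    using term_le_sum[OF that, of ?d] dw by simp
  have sup: "\<forall>l. l \<notin> {1..n - i} \<longrightarrow> ?d l = 0"
  proof (intro allI impI)
    fix l assume l: "l \<notin> {1..n - i}"
    show "?d l = 0"
    proof (cases "l \<in> {1..n}")
      case True
      with l have "l > n - i" by auto
      moreover have "l * ?d l \<le> n - i" by (rule bnd[OF True])
      ultimately show ?thesis by (cases "?d l") auto
    next
      case False then show ?thesis using as i by auto
    qed
  qed
  have le: "\<forall>l. ?d l \<le> n - i"
  proof
    fix l
    show "?d l \<le> n - i"
    proof (cases "l \<in> {1..n}")
      case True
      then have "l * ?d l \<le> n - i" by (rule bnd)
      moreover have "?d l \<le> l * ?d l" using True by simp
      ultimately show ?thesis by linarith
    next
      case False
      then have "l \<notin> {1..n - i}" by auto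
      then have "?d l = 0" using sup by blast
      then show ?thesis by (metis le0)
    qed
  qed
  have "(\<Sum>l=1..n. l * ?d l) = (\<Sum>l=1..n-i. l * ?d l)"
    by (rule sum_shrink) (use sup in auto)
  moreover have "(\<Sum>l=1..n. ?d l) = (\<Sum>l=1..n-i. ?d l)"
    by (rule sum_shrink) (use sup in auto)
  ultimately show ?thesis using sup le dw dc by (simp add: Kset_def)
qed

lemma W_dec:
  assumes i: "i \<in> {1..N}" and ki: "1 \<le> k i"
  shows "real (k i) * W N c k = c i * W N c (k(i := k i - 1))"
proof -
  obtain m where m: "k i = Suc m" using ki by (cases "k i") auto
  define P where "P = (\<Prod>l\<in>{1..N} - {i}. c l ^ k l / fact (k l))"
  have A: "W N c k = c i ^ k i / fact (k i) * P"
    unfolding W_def P_def using i by (subst prod.remove[of _ i]) auto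
  have B: "W N c (k(i := k i - 1)) = c i ^ m / fact m * P"
    unfolding W_def P_def using i m by (subst prod.remove[of _ i]) (auto intro!: prod.cong)
  have C: "real (k i) * (c i ^ k i / fact (k i)) = c i * (c i ^ m / fact m)"
  proof -
    have f: "(fact (Suc m) :: real) = real (Suc m) * fact m" by (rule fact_Suc)
    have "real (Suc m) * (c i ^ Suc m / fact (Suc m)) = c i * (c i ^ m / fact m)"
      unfolding f by (simp add: field_simps del: of_nat_Suc)
    then show ?thesis using m by simp
  qed
  show ?thesis unfolding A B by (simp only: mult.assoc[symmetric] C)
qed

lemma T_rec:
  assumes i: "i \<in> {1..n}"
  shows "(\<Sum>k\<in>{k \<in> Kset n (Suc j). 1 \<le> k i}. real (k i) * W n c k) = c i * T c (n - i) j"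
proof -
  have "(\<Sum>k\<in>{k \<in> Kset n (Suc j). 1 \<le> k i}. real (k i) * W n c k)
      = (\<Sum>k\<in>{k \<in> Kset n (Suc j). 1 \<le> k i}. c i * W n c (k(i := k i - 1)))"
    using i by (intro sum.cong refl W_dec) auto
  also have "\<dots> = (\<Sum>b\<in>Kset (n - i) j. c i * W n c b)"
  proof (rule sum.reindex_bij_witness[where j="\<lambda>k. k(i := k i - 1)" and i="\<lambda>b. b(i := b i + 1)"])
    fix a assume "a \<in> {k \<in> Kset n (Suc j). 1 \<le> k i}"
    then show "(a(i := a i - 1))(i := (a(i := a i - 1)) i + 1) = a" by (auto simp: fun_eq_iff)
    show "a(i := a i - 1) \<in> Kset (n - i) j" by (rule dec_in) fact+
  next
    fix b assume b: "b \<in> Kset (n - i) j"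
    show "(b(i := b i + 1))(i := (b(i := b i + 1)) i - 1) = b" by (auto simp: fun_eq_iff)
    show "b(i := b i + 1) \<in> {k \<in> Kset n (Suc j). 1 \<le> k i}" by (rule inc_in) fact+
  qed simp
  also have "\<dots> = (\<Sum>b\<in>Kset (n - i) j. c i * W (n - i) c b)"
    by (intro sum.cong refl arg_cong2[where f="(*)"] W_mono) (auto simp: Kset_def)
  finally show ?thesis by (simp add: T_def sum_distrib_left)
qed

lemma T_Suc: "real (Suc j) * T c n (Suc j) = (\<Sum>i=1..n. c i * T c (n - i) j)"
proof -
  have "real (Suc j) * T c n (Suc j) = (\<Sum>k\<in>Kset n (Suc j). real (\<Sum>i=1..n. k i) * W n c k)"
    unfolding T_def sum_distrib_left by (intro sum.cong refl) (auto simp: Kset_def)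
  also have "\<dots> = (\<Sum>k\<in>Kset n (Suc j). \<Sum>i=1..n. real (k i) * W n c k)"
    by (simp add: sum_distrib_right)
  also have "\<dots> = (\<Sum>i=1..n. \<Sum>k\<in>Kset n (Suc j). real (k i) * W n c k)"
    by (rule sum.swap)
  also have "\<dots> = (\<Sum>i=1..n. \<Sum>k\<in>{k \<in> Kset n (Suc j). 1 \<le> k i}. real (k i) * W n c k)"
  proof (rule sum.cong[OF refl])
    fix i assume "i \<in> {1..n}"
    show "(\<Sum>k\<in>Kset n (Suc j). real (k i) * W n c k) = (\<Sum>k\<in>{k \<in> Kset n (Suc j). 1 \<le> k i}. real (k i) * W n c k)"
      by (rule sum.mono_neutral_right) (auto simp: Kset_finite)
  qed
  also have "\<dots> = (\<Sum>i=1..n. c i * T c (n - i) j)"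
    by (intro sum.cong refl T_rec)
  finally show ?thesis .
qed

lemma Kset_0: "Kset n 0 = (if n = 0 then {\<lambda>_. 0} else {})"
proof (cases "n = 0")
  case True
  then show ?thesis by (auto simp: Kset_def fun_eq_iff)
next
  case False
  have "k \<notin> Kset n 0" for k
  proof
    assume k: "k \<in> Kset n 0"
    then have "\<forall>l\<in>{1..n}. k l = 0" by (auto simp: Kset_def)
    then have z: "(\<Sum>i=1..n. i * k i) = 0" by simp
    have ne: "(\<Sum>i=1..n. i * k i) = n" using k unfolding Kset_def mem_Collect_eq by blast
    show False using z ne False by linarith
  qed
  with False show ?thesis by auto
qed

lemma Kset_big: "n < j \<Longrightarrow> Kset n j = {}"
proof -
  assume nj: "n < j"
  have "k \<notin> Kset n j" for k
  proof
    assume k: "k \<in> Kset n j"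
    have "(\<Sum>i=1..n. k i) \<le> (\<Sum>i=1..n. i * k i)" by (intro sum_mono) auto
    with k nj show False by (simp add: Kset_def)
  qed
  then show ?thesis by auto
qed

definition Cf :: "(nat \<Rightarrow> real) \<Rightarrow> real fps" where
  "Cf c = Abs_fps (\<lambda>i. if i = 0 then 0 else c i)"

lemma Cf_nth: "fps_nth (Cf c) i = (if i = 0 then 0 else c i)"
  by (simp add: Cf_def)

lemma Cf_pow: "fps_nth (Cf c ^ j) n = fact j * T c n j"
proof (induction j arbitrary: n)
  case 0
  then show ?case by (simp add: T_def Kset_0 W_def)
next
  case (Suc j)
  have "fps_nth (Cf c ^ Suc j) n = (\<Sum>i=0..n. fps_nth (Cf c) i * fps_nth (Cf c ^ j) (n - i))"
    by (simp add: fps_mult_nth)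
  also have "\<dots> = (\<Sum>i=1..n. c i * (fact j * T c (n - i) j))"
  proof -
    have "(\<Sum>i=0..n. fps_nth (Cf c) i * fps_nth (Cf c ^ j) (n - i)) = (\<Sum>i=1..n. fps_nth (Cf c) i * fps_nth (Cf c ^ j) (n - i))"
      by (rule sum.mono_neutral_right) (auto simp: Cf_nth)
    also have "\<dots> = (\<Sum>i=1..n. c i * (fact j * T c (n - i) j))"
      by (intro sum.cong refl) (auto simp: Cf_nth Suc.IH)
    finally show ?thesis .
  qed
  also have "\<dots> = fact j * (real (Suc j) * T c n (Suc j))"
    unfolding T_Suc sum_distrib_left by (simp add: mult.left_commute)
  also have "\<dots> = fact (Suc j) * T c n (Suc j)" by simp
  finally show ?case .
qed

lemma Cf_pow_bell: "fps_nth (Cf (\<lambda>i. b i / fact i) ^ j) n = fact j / fact n * bell_partial n j b"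
  by (simp add: Cf_pow bell_eq)

lemma bell_big: "n < j \<Longrightarrow> bell_partial n j b = 0"
  by (simp add: bell_eq T_def Kset_big)

lemma T_nonneg: "(\<And>i. 0 \<le> c i) \<Longrightarrow> 0 \<le> T c n j"
  unfolding T_def by (intro sum_nonneg W_nonneg)

lemma bell_nonneg: "(\<And>i. 0 \<le> b i) \<Longrightarrow> 0 \<le> bell_partial n j b"
  by (simp add: bell_eq T_nonneg)


lemma fps_pow_sums:
  fixes F :: "real fps"
  assumes nn: "\<And>i. 0 \<le> fps_nth F i" and z: "0 \<le> z"
    and S: "(\<lambda>i. fps_nth F i * z ^ i) sums S"
  shows "(\<lambda>n. fps_nth (F ^ j) n * z ^ n) sums (S ^ j) \<and> (\<forall>n. 0 \<le> fps_nth (F ^ j) n)"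
proof (induction j)
  case 0
  have "(\<lambda>n. fps_nth (F ^ 0) n * z ^ n) = (\<lambda>n. if n = 0 then 1 else 0)"
    by (auto simp: fun_eq_iff)
  moreover have "(\<lambda>n::nat. if n = 0 then (1::real) else 0) sums 1"
    using sums_single[where f="\<lambda>_. 1::real" and i=0] by simp
  ultimately show ?case by simp
next
  case (Suc j)
  then have IH: "(\<lambda>n. fps_nth (F ^ j) n * z ^ n) sums (S ^ j)" and nnj: "\<And>n. 0 \<le> fps_nth (F ^ j) n"
    by auto
  have sa: "summable (\<lambda>k. norm (fps_nth F k * z ^ k))"
    using S nn z by (simp add: sums_summable)
  have sb: "summable (\<lambda>k. norm (fps_nth (F ^ j) k * z ^ k))"
    using IH nnj z by (simp add: sums_summable)
  have "(\<lambda>k. \<Sum>i\<le>k. (fps_nth F i * z ^ i) * (fps_nth (F ^ j) (k - i) * z ^ (k - i)))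
      sums ((\<Sum>k. fps_nth F k * z ^ k) * (\<Sum>k. fps_nth (F ^ j) k * z ^ k))"
    by (rule Cauchy_product_sums[OF sa sb])
  moreover have "(\<lambda>k. \<Sum>i\<le>k. (fps_nth F i * z ^ i) * (fps_nth (F ^ j) (k - i) * z ^ (k - i)))
      = (\<lambda>k. fps_nth (F ^ Suc j) k * z ^ k)"
  proof
    fix k
    have "(\<Sum>i\<le>k. (fps_nth F i * z ^ i) * (fps_nth (F ^ j) (k - i) * z ^ (k - i)))
        = (\<Sum>i\<le>k. fps_nth F i * fps_nth (F ^ j) (k - i) * z ^ k)"
    proof (rule sum.cong[OF refl])
      fix i assume "i \<in> {..k}"
      then have "z ^ i * z ^ (k - i) = z ^ k" by (simp add: power_add[symmetric])
      then show "(fps_nth F i * z ^ i) * (fps_nth (F ^ j) (k - i) * z ^ (k - i))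
          = fps_nth F i * fps_nth (F ^ j) (k - i) * z ^ k"
        by (metis mult.assoc mult.left_commute)
    qed
    also have "\<dots> = fps_nth (F ^ Suc j) k * z ^ k"
      by (simp add: fps_mult_nth atLeast0AtMost sum_distrib_right)
    finally show "(\<Sum>i\<le>k. (fps_nth F i * z ^ i) * (fps_nth (F ^ j) (k - i) * z ^ (k - i)))
        = fps_nth (F ^ Suc j) k * z ^ k" .
  qed
  ultimately have "(\<lambda>k. fps_nth (F ^ Suc j) k * z ^ k) sums (S * S ^ j)"
    using sums_unique[OF S] sums_unique[OF IH] by simp
  moreover have "\<forall>n. 0 \<le> fps_nth (F ^ Suc j) n"
    using nn nnj by (simp add: fps_mult_nth sum_nonneg)
  ultimately show ?case by simp
qed

lemma powser_unique:
  fixes e :: "nat \<Rightarrow> real"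
  assumes r: "0 < r" and S: "\<And>z. 0 < z \<Longrightarrow> z < r \<Longrightarrow> (\<lambda>n. e n * z ^ n) sums 0"
  shows "e n = 0"
proof (induction n rule: less_induct)
  case (less n)
  define F where "F w = (\<Sum>k. e (k + n) * w ^ k)" for w :: real
  have sh: "(\<lambda>k. e (k + n) * z ^ k) sums 0" if z: "0 < z" "z < r" for z
  proof -
    have "(\<lambda>k. e (k + n) * z ^ (k + n)) sums (0 - (\<Sum>m<n. e m * z ^ m))"
      using sums_split_initial_segment[OF S[OF z], of n] by simp
    also have "(\<Sum>m<n. e m * z ^ m) = 0" using less by simp
    finally have "(\<lambda>k. e (k + n) * z ^ (k + n) * inverse (z ^ n)) sums (0 * inverse (z ^ n))"
      by (intro sums_mult2) simp
    moreover have "(\<lambda>k. e (k + n) * z ^ (k + n) * inverse (z ^ n)) = (\<lambda>k. e (k + n) * z ^ k)"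
      using z by (auto simp: fun_eq_iff power_add)
    ultimately show ?thesis by simp
  qed
  have r2: "0 < r / 2" "r / 2 < r" using r by auto
  have "summable (\<lambda>k. e (k + n) * (r / 2) ^ k)" using sh[OF r2] by (rule sums_summable)
  then have "isCont F 0" unfolding F_def by (rule isCont_powser) (use r in simp)
  then have "(F \<longlongrightarrow> F 0) (at 0)" by (simp add: isCont_def)
  then have lim1: "(F \<longlongrightarrow> F 0) (at_right 0)"
    by (rule tendsto_mono[rotated]) (simp add: at_le)
  have "eventually (\<lambda>w. F w = 0) (at_right 0)"
    unfolding eventually_at_right_field
    by (rule exI[where x=r]) (use r sh in \<open>auto simp: F_def sums_iff\<close>)
  then have lim2: "(F \<longlongrightarrow> 0) (at_right 0)" by (rule tendsto_eventually)
  have "F 0 = 0" using tendsto_unique[OF trivial_limit_at_right_real lim1 lim2] .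
  then show ?case by (simp add: F_def)
qed

lemma ennreal_suminf_swap: "(\<Sum>m. \<Sum>n. f m n :: ennreal) = (\<Sum>n. \<Sum>m. f m n)"
proof -
  have "(\<Sum>m. \<Sum>n. f m n) = (\<integral>\<^sup>+m. (\<Sum>n. f m n) \<partial>count_space UNIV)"
    by (simp add: nn_integral_count_space_nat)
  also have "\<dots> = (\<Sum>n. \<integral>\<^sup>+m. f m n \<partial>count_space UNIV)"
    by (rule nn_integral_suminf) simp
  also have "\<dots> = (\<Sum>n. \<Sum>m. f m n)"
    by (simp add: nn_integral_count_space_nat)
  finally show ?thesis .
qed


lemma card_key:
  fixes r b :: "nat \<Rightarrow> real" and G :: "real \<Rightarrow> real"
  assumes bnn: "\<And>i. 0 \<le> b i" and rnn: "\<And>m. 0 \<le> r m"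
    and Gs: "(\<lambda>i. b i / fact i * z ^ i) sums G z"
    and rs: "summable (\<lambda>m. r m * G z ^ m)"
    and z: "0 \<le> z"
  shows "ennreal (\<Sum>m. r m * G z ^ m) =
    (\<Sum>n. ennreal (z ^ n) * (\<Sum>j\<le>n. \<Sum>m. ennreal (bell_partial n j b *
        (if j \<le> m then fact m / (fact n * fact (m - j)) * r m * b 0 ^ (m - j) else 0))))"
proof -
  define c where "c i = b i / fact i" for i
  define C where "C = Cf c"
  define y where "y = G z - b 0"
  define u where "u n j m = (if j \<le> m then fact m / (fact n * fact (m - j)) * r m * b 0 ^ (m - j) else 0)" for n j m
  have unn: "0 \<le> u n j m" for n j m unfolding u_def using rnn bnn by auto
  have bellnn: "0 \<le> bell_partial n j b" for n j using bnn by (rule bell_nonneg)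
  have Cnth: "fps_nth (C ^ j) n = fact j / fact n * bell_partial n j b" for j n
    unfolding C_def c_def by (rule Cf_pow_bell)
  have Cnn: "0 \<le> fps_nth C i" for i unfolding C_def c_def Cf_nth using bnn by auto
  have Cs: "(\<lambda>i. fps_nth C i * z ^ i) sums y"
  proof -
    have "(\<lambda>i. b i / fact i * z ^ i - (if i = 0 then b 0 else 0)) sums (G z - b 0)"
      by (rule sums_diff[OF Gs]) (rule sums_single[where f="\<lambda>_. b 0" and i=0])
    moreover have "(\<lambda>i. b i / fact i * z ^ i - (if i = 0 then b 0 else 0)) = (\<lambda>i. fps_nth C i * z ^ i)"
      by (auto simp: fun_eq_iff C_def c_def Cf_nth)
    ultimately show ?thesis by (simp add: y_def)
  qed
  have ynn: "0 \<le> y"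
  proof -
    have "y = (\<Sum>i. fps_nth C i * z ^ i)" using Cs by (rule sums_unique)
    moreover have "0 \<le> (\<Sum>i. fps_nth C i * z ^ i)"
      by (rule suminf_nonneg) (use Cs Cnn z in \<open>auto simp: sums_summable\<close>)
    ultimately show ?thesis by simp
  qed
  have Gy: "G z = y + b 0" by (simp add: y_def)
  have Gnn: "0 \<le> G z" using ynn bnn[of 0] Gy by simp
  have Cj: "(\<lambda>n. fps_nth (C ^ j) n * z ^ n) sums (y ^ j)" and Cjnn: "\<And>n. 0 \<le> fps_nth (C ^ j) n" for j
    using fps_pow_sums[OF Cnn z Cs, of j] by auto
  define T3 where "T3 m j n = ennreal (if j \<le> m then r m * of_nat (m choose j) * b 0 ^ (m - j) * (fps_nth (C ^ j) n * z ^ n) else 0)" for m j n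
  have s1: "ennreal (\<Sum>m. r m * G z ^ m) = (\<Sum>m. ennreal (r m * G z ^ m))"
    by (rule suminf_ennreal2[symmetric]) (use rnn Gnn rs in auto)
  have s2: "ennreal (r m * G z ^ m) = (\<Sum>j. \<Sum>n. T3 m j n)" for m
  proof -
    define X where "X j = r m * of_nat (m choose j) * b 0 ^ (m - j) * y ^ j" for j
    have Xnn: "0 \<le> X j" for j unfolding X_def using rnn bnn ynn by auto
    have "r m * G z ^ m = (\<Sum>j\<le>m. X j)"
      unfolding Gy X_def binomial_ring sum_distrib_left by (simp add: mult_ac)
    then have "ennreal (r m * G z ^ m) = (\<Sum>j\<le>m. ennreal (X j))"
      using Xnn by (simp add: sum_ennreal)
    also have "\<dots> = (\<Sum>j. if j \<le> m then ennreal (X j) else 0)"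
      by (subst suminf_finite[of "{..m}"]) auto
    also have "\<dots> = (\<Sum>j. \<Sum>n. T3 m j n)"
    proof (rule suminf_cong)
      fix j
      show "(if j \<le> m then ennreal (X j) else 0) = (\<Sum>n. T3 m j n)"
      proof (cases "j \<le> m")
        case True
        have "(\<lambda>n. r m * of_nat (m choose j) * b 0 ^ (m - j) * (fps_nth (C ^ j) n * z ^ n)) sums
            (r m * of_nat (m choose j) * b 0 ^ (m - j) * y ^ j)"
          by (rule sums_mult[OF Cj])
        then have "(\<Sum>n. ennreal (r m * of_nat (m choose j) * b 0 ^ (m - j) * (fps_nth (C ^ j) n * z ^ n)))
            = ennreal (X j)"
          unfolding X_def by (rule suminf_ennreal_eq[rotated]) (use rnn bnn Cjnn z in auto)
        then show ?thesis using True by (simp add: T3_def)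
      next
        case False
        then show ?thesis by (simp add: T3_def)
      qed
    qed
    finally show ?thesis .
  qed
  have s6: "(\<Sum>j. \<Sum>m. T3 m j n) = ennreal (z ^ n) * (\<Sum>j\<le>n. \<Sum>m. ennreal (bell_partial n j b * u n j m))" for n
  proof -
    have t: "T3 m j n = ennreal (z ^ n) * ennreal (bell_partial n j b * u n j m)" for m j
    proof (cases "j \<le> m")
      case True
      have eq: "r m * of_nat (m choose j) * b 0 ^ (m - j) * (fps_nth (C ^ j) n * z ^ n)
          = z ^ n * (bell_partial n j b * u n j m)"
        unfolding Cnth u_def binomial_fact[OF True] using True by (simp add: field_simps)
      have "T3 m j n = ennreal (z ^ n * (bell_partial n j b * u n j m))"
        unfolding T3_def if_P[OF True] eq by (rule refl)
      also have "\<dots> = ennreal (z ^ n) * ennreal (bell_partial n j b * u n j m)"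
        by (rule ennreal_mult) (use z bellnn unn in auto)
      finally show ?thesis .
    next
      case False
      then show ?thesis by (simp add: T3_def u_def)
    qed
    have "(\<Sum>j. \<Sum>m. T3 m j n) = (\<Sum>j. ennreal (z ^ n) * (\<Sum>m. ennreal (bell_partial n j b * u n j m)))"
      by (simp add: t)
    also have "\<dots> = ennreal (z ^ n) * (\<Sum>j. \<Sum>m. ennreal (bell_partial n j b * u n j m))"
      by simp
    also have "(\<Sum>j. \<Sum>m. ennreal (bell_partial n j b * u n j m)) = (\<Sum>j\<le>n. \<Sum>m. ennreal (bell_partial n j b * u n j m))"
      by (rule suminf_finite) (auto simp: bell_big)
    finally show ?thesis .
  qed
  have "ennreal (\<Sum>m. r m * G z ^ m) = (\<Sum>m. \<Sum>j. \<Sum>n. T3 m j n)"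
    unfolding s1 s2 ..
  also have "\<dots> = (\<Sum>m. \<Sum>n. \<Sum>j. T3 m j n)"
    by (rule suminf_cong) (rule ennreal_suminf_swap)
  also have "\<dots> = (\<Sum>n. \<Sum>m. \<Sum>j. T3 m j n)"
    by (rule ennreal_suminf_swap)
  also have "\<dots> = (\<Sum>n. \<Sum>j. \<Sum>m. T3 m j n)"
    by (rule suminf_cong) (rule ennreal_suminf_swap)
  also have "\<dots> = (\<Sum>n. ennreal (z ^ n) * (\<Sum>j\<le>n. \<Sum>m. ennreal (bell_partial n j b * u n j m)))"
    by (rule suminf_cong) (rule s6)
  finally show ?thesis unfolding u_def .
qed


lemma card_algebra:
  fixes card r b :: "nat \<Rightarrow> real" and G :: "real \<Rightarrow> real"
  assumes bnn: "\<And>i. 0 \<le> b i" and rnn: "\<And>m. 0 \<le> r m" and cnn: "\<And>n. 0 \<le> card n"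
    and Gs: "\<And>z. 0 \<le> z \<Longrightarrow> z < 1 \<Longrightarrow> (\<lambda>i. b i / fact i * z ^ i) sums G z"
    and rs: "\<And>z. 0 \<le> z \<Longrightarrow> z < 1 \<Longrightarrow> summable (\<lambda>m. r m * G z ^ m)"
    and cs: "\<And>z. 0 \<le> z \<Longrightarrow> z < 1 \<Longrightarrow> (\<lambda>n. card n * z ^ n) sums (\<Sum>m. r m * G z ^ m)"
  shows "card n = (\<Sum>j\<le>n. bell_partial n j b *
      (\<Sum>m. if j \<le> m then fact m / (fact n * fact (m - j)) * r m * b 0 ^ (m - j) else 0))"
proof -
  define u where "u n j m = (if j \<le> m then fact m / (fact n * fact (m - j)) * r m * b 0 ^ (m - j) else 0)" for n j m
  define D where "D n = (\<Sum>j\<le>n. \<Sum>m. ennreal (bell_partial n j b * u n j m))" for n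
  define E where "E z = (\<Sum>m. r m * G z ^ m)" for z
  have unn: "0 \<le> u n j m" for n j m unfolding u_def using rnn bnn by auto
  have bellnn: "0 \<le> bell_partial n j b" for n j using bnn by (rule bell_nonneg)
  have key: "ennreal (E z) = (\<Sum>n. ennreal (z ^ n) * D n)" if z: "0 \<le> z" "z < 1" for z
    unfolding E_def D_def u_def by (rule card_key[where G=G and z=z and b=b and r=r, OF bnn rnn Gs[OF z] rs[OF z] z(1)])
  have Gnn: "0 \<le> G z" if z: "0 \<le> z" "z < 1" for z
  proof -
    have "G z = (\<Sum>i. b i / fact i * z ^ i)" using Gs[OF z] by (rule sums_unique)
    moreover have "0 \<le> (\<Sum>i. b i / fact i * z ^ i)"
      by (rule suminf_nonneg) (use Gs[OF z] bnn z in \<open>auto simp: sums_summable\<close>)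
    ultimately show ?thesis by simp
  qed
  have Enn: "0 \<le> E z" if z: "0 \<le> z" "z < 1" for z
    unfolding E_def by (rule suminf_nonneg[OF rs[OF z]]) (use rnn Gnn[OF z] in auto)
  have Dfin: "D n < top" for n
  proof -
    have h: "0 \<le> (1/2::real)" "(1/2::real) < 1" by auto
    have "(\<Sum>n. ennreal ((1/2) ^ n) * D n) < top" unfolding key[OF h, symmetric] by simp
    then have "ennreal ((1/2) ^ n) * D n < top" by (rule ennreal_suminf_lessD)
    moreover have "ennreal ((1/2::real) ^ n) \<noteq> 0" by simp
    ultimately show ?thesis by (auto simp: ennreal_mult_less_top)
  qed
  define d where "d n = enn2real (D n)" for n
  have Dd: "D n = ennreal (d n)" for n unfolding d_def using Dfin[of n] by simp
  have dnn: "0 \<le> d n" for n unfolding d_def by simp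
  have ds: "(\<lambda>n. d n * z ^ n) sums E z" if z: "0 \<le> z" "z < 1" for z
  proof -
    have eq: "(\<Sum>n. ennreal (d n * z ^ n)) = ennreal (E z)"
      unfolding key[OF z] Dd using dnn z by (simp add: ennreal_mult mult.commute)
    have sm: "summable (\<lambda>n. d n * z ^ n)"
      by (rule summable_suminf_not_top) (use dnn z eq in auto)
    have "ennreal (\<Sum>n. d n * z ^ n) = ennreal (E z)"
      unfolding eq[symmetric] by (rule suminf_ennreal2[OF _ sm, symmetric]) (use dnn z in auto)
    moreover have a: "0 \<le> (\<Sum>n. d n * z ^ n)" by (rule suminf_nonneg[OF sm]) (use dnn z in auto)
    ultimately have "(\<Sum>n. d n * z ^ n) = E z"
      using ennreal_inj[OF a Enn[OF z]] by blast
    then show ?thesis using sm by (simp add: sums_iff)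
  qed
  have "card n - d n = 0"
  proof (rule powser_unique[of 1])
    fix z :: real assume z: "0 < z" "z < 1"
    have "(\<lambda>n. card n * z ^ n - d n * z ^ n) sums (E z - E z)"
    proof -
      have z': "0 \<le> z" "z < 1" using z by auto
      show ?thesis using sums_diff[OF cs[OF z', unfolded E_def[symmetric]] ds[OF z']] by simp
    qed
    then show "(\<lambda>n. (card n - d n) * z ^ n) sums 0" by (simp add: left_diff_distrib)
  qed simp
  then have cd: "card n = d n" by simp
  define V where "V j = bell_partial n j b * (\<Sum>m. u n j m)" for j
  have Sj: "(\<Sum>m. ennreal (bell_partial n j b * u n j m)) = ennreal (V j) \<and> 0 \<le> V j" if j: "j \<le> n" for j
  proof (cases "bell_partial n j b = 0")
    case True
    then show ?thesis by (simp add: V_def)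
  next
    case False
    then have bp: "0 < bell_partial n j b" using bellnn[of n j] by simp
    have "(\<Sum>m. ennreal (bell_partial n j b * u n j m)) < top"
    proof -
      have "D n < top" by (rule Dfin)
      then have "\<forall>j\<in>{..n}. (\<Sum>m. ennreal (bell_partial n j b * u n j m)) < top"
        unfolding D_def by (subst (asm) ennreal_sum_less_top) auto
      then show ?thesis using j by auto
    qed
    moreover have "(\<Sum>m. ennreal (bell_partial n j b * u n j m)) = ennreal (bell_partial n j b) * (\<Sum>m. ennreal (u n j m))"
      using bellnn unn by (simp add: ennreal_mult)
    ultimately have ut: "(\<Sum>m. ennreal (u n j m)) < top"
      using bp by (auto simp: ennreal_mult_less_top)
    have sm: "summable (u n j)" by (rule summable_suminf_not_top) (use unn ut in auto)
    have u0: "0 \<le> (\<Sum>m. u n j m)" by (rule suminf_nonneg[OF sm unn])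
    have "(\<Sum>m. ennreal (bell_partial n j b * u n j m)) = ennreal (bell_partial n j b) * ennreal (\<Sum>m. u n j m)"
      using bellnn unn suminf_ennreal2[OF unn sm] by (simp add: ennreal_mult)
    also have "\<dots> = ennreal (V j)" unfolding V_def using bp u0 by (simp add: ennreal_mult)
    finally show ?thesis using bp u0 by (simp add: V_def)
  qed
  have "D n = (\<Sum>j\<le>n. ennreal (V j))" unfolding D_def by (intro sum.cong refl) (use Sj in auto)
  also have "\<dots> = ennreal (\<Sum>j\<le>n. V j)" by (rule sum_ennreal) (use Sj in auto)
  finally have DV: "D n = ennreal (\<Sum>j\<le>n. V j)" .
  have Vnn: "0 \<le> (\<Sum>j\<le>n. V j)" by (rule sum_nonneg) (use Sj in auto)
  have "d n = (\<Sum>j\<le>n. V j)"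
    unfolding d_def DV using Vnn by simp
  then show ?thesis unfolding cd V_def u_def .
qed


lemma prod_mset_const: "prod_mset (image_mset (\<lambda>_. z) M) = z ^ size M"
  by (induction M) auto

lemma size_cnt_aux: "set_mset M \<subseteq> A \<Longrightarrow> size M = cnt A M"
  by (induction M) auto

lemma size_cnt: "M \<in> cfg_space X \<Longrightarrow> size M = cnt (space X) M"
  using size_cnt_aux by (auto simp: cfg_space_def)

lemma pgfl_const_card:
  assumes pp: "point_process X P" and z: "0 \<le> z" "z \<le> 1"
  shows "(\<lambda>n. card_dist P n * z ^ n) sums pgfl P (\<lambda>_. z)"
proof -
  have ps: "prob_space P" and sP: "sets P = sets (cfgM X)" using pp by (auto simp: point_process_def)
  interpret prob_space P by (rule ps)
  have spP: "space P = cfg_space X" using sets_eq_imp_space_eq[OF sP] by simp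
  define A where "A n = {M \<in> space P. size M = n}" for n
  have A_eq: "A n = {M \<in> cfg_space X. cnt (space X) M = n}" for n
    unfolding A_def spP using size_cnt by auto
  have A_sets: "A n \<in> sets P" for n unfolding A_eq sP by (rule gen_in_sets) simp
  have g: "(\<lambda>_. z) \<in> borel_measurable X" by simp
  have bnd: "\<And>x. x \<in> space X \<Longrightarrow> 0 \<le> z \<and> z \<le> 1" using z by simp
  have "(\<integral>\<^sup>+M. ennreal (prod_mset (image_mset (\<lambda>_. z) M)) \<partial>P)
      = (\<integral>\<^sup>+M. (\<Sum>n. ennreal (z ^ n) * indicator (A n) M) \<partial>P)"
  proof (rule nn_integral_cong)
    fix M assume M: "M \<in> space P"
    have "(\<Sum>n. ennreal (z ^ n) * indicator (A n) M) = (\<Sum>n\<in>{size M}. ennreal (z ^ n) * indicator (A n) M)"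
      by (rule suminf_finite) (auto simp: A_def)
    also have "\<dots> = ennreal (z ^ size M)" using M by (simp add: A_def)
    finally show "ennreal (prod_mset (image_mset (\<lambda>_. z) M)) = (\<Sum>n. ennreal (z ^ n) * indicator (A n) M)"
      by (simp add: prod_mset_const)
  qed
  also have "\<dots> = (\<Sum>n. \<integral>\<^sup>+M. ennreal (z ^ n) * indicator (A n) M \<partial>P)"
    by (rule nn_integral_suminf) (use A_sets in auto)
  also have "\<dots> = (\<Sum>n. ennreal (card_dist P n * z ^ n))"
  proof (rule suminf_cong)
    fix n
    have "(\<integral>\<^sup>+M. ennreal (z ^ n) * indicator (A n) M \<partial>P) = ennreal (z ^ n) * emeasure P (A n)"
      by (rule nn_integral_cmult_indicator[OF A_sets])
    also have "\<dots> = ennreal (card_dist P n * z ^ n)"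
      using z by (simp add: emeasure_eq_measure card_dist_def A_def ennreal_mult[symmetric] mult.commute)
    finally show "(\<integral>\<^sup>+M. ennreal (z ^ n) * indicator (A n) M \<partial>P) = ennreal (card_dist P n * z ^ n)" .
  qed
  finally have eq: "(\<integral>\<^sup>+M. ennreal (prod_mset (image_mset (\<lambda>_. z) M)) \<partial>P) = (\<Sum>n. ennreal (card_dist P n * z ^ n))" .
  have le1: "(\<integral>\<^sup>+M. ennreal (prod_mset (image_mset (\<lambda>_. z) M)) \<partial>P) \<le> 1"
  proof -
    have "(\<integral>\<^sup>+M. ennreal (prod_mset (image_mset (\<lambda>_. z) M)) \<partial>P) \<le> (\<integral>\<^sup>+M. 1 \<partial>P)"
      by (rule nn_integral_mono) (use z in \<open>auto simp: prod_mset_const power_le_one\<close>)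
    also have "\<dots> = 1" by (simp add: emeasure_space_1)
    finally show ?thesis .
  qed
  have nn: "0 \<le> card_dist P n * z ^ n" for n using z by (simp add: card_dist_def)
  have sm: "summable (\<lambda>n. card_dist P n * z ^ n)"
    by (rule summable_suminf_not_top) (use nn eq le1 in \<open>auto simp: top_unique\<close>)
  have "pgfl P (\<lambda>_. z) = enn2real (\<Sum>n. ennreal (card_dist P n * z ^ n))"
    by (simp only: pgfl_nn[OF sP g bnd] eq)
  also have "\<dots> = (\<Sum>n. card_dist P n * z ^ n)"
    using suminf_ennreal2[OF nn sm] suminf_nonneg[OF sm nn] by simp
  finally show ?thesis using sm by (simp add: sums_iff)
qed

lemma kernel_at:
  assumes "K \<in> XM \<rightarrow>\<^sub>M prob_algebra XM" "x \<in> space XM"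
  shows "prob_space (K x)" "sets (K x) = sets XM"
  using measurable_space[OF assms] by (auto simp: space_prob_algebra)

definition beta :: "real \<Rightarrow> real \<Rightarrow> real \<Rightarrow> nat \<Rightarrow> real" where
  "beta ps pb lam i = (if i = 0 then (1 - ps) * ((1 - pb) + pb * exp (- lam))
     else if i = 1 then (1 - ps) * pb * exp (- lam) * lam + ps * ((1 - pb) + pb * exp (- lam))
     else pb * lam ^ (i - 1) * exp (- lam) * ((1 - ps) * lam + real i * ps))"

lemma beta_nonneg: "0 \<le> ps \<Longrightarrow> ps \<le> 1 \<Longrightarrow> 0 \<le> pb \<Longrightarrow> pb \<le> 1 \<Longrightarrow> 0 \<le> lam \<Longrightarrow> 0 \<le> beta ps pb lam i"
  unfolding beta_def by (auto intro!: mult_nonneg_nonneg add_nonneg_nonneg)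

lemma gz_sums:
  fixes ps pb lam z :: real
  shows "(\<lambda>i. beta ps pb lam i / fact i * z ^ i) sums
     ((1 - ps + ps * z) * (1 - pb + pb * exp (- lam) * exp (lam * z)))"
proof -
  have e: "(\<lambda>n. (lam * z) ^ n / fact n) sums exp (lam * z)"
    using exp_converges[of "lam * z"] by (simp add: divide_inverse mult.commute)
  have e1: "(\<lambda>n. if n = 0 then 0 else (lam * z) ^ (n - 1) / fact (n - 1)) sums exp (lam * z)"
  proof -
    have "(\<lambda>n. (\<lambda>n. if n = 0 then 0 else (lam * z) ^ (n - 1) / fact (n - 1)) (Suc n)) sums exp (lam * z)"
      using e by simp
    from sums_Suc_iff[THEN iffD1, OF this] show ?thesis by simp
  qed
  have S: "(\<lambda>i. (if i = 0 then (1 - ps) * (1 - pb) else 0)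
        + (1 - ps) * pb * exp (- lam) * ((lam * z) ^ i / fact i)
        + (if i = 1 then ps * (1 - pb) * z else 0)
        + ps * pb * exp (- lam) * z * (if i = 0 then 0 else (lam * z) ^ (i - 1) / fact (i - 1)))
     sums ((1 - ps) * (1 - pb) + (1 - ps) * pb * exp (- lam) * exp (lam * z) + ps * (1 - pb) * z
        + ps * pb * exp (- lam) * z * exp (lam * z))"
    by (intro sums_add sums_mult e e1 sums_single[where f="\<lambda>_. (1 - ps) * (1 - pb)" and i=0]
         sums_single[where f="\<lambda>_. ps * (1 - pb) * z" and i=1])
  have "(\<lambda>i. beta ps pb lam i / fact i * z ^ i) = (\<lambda>i. (if i = 0 then (1 - ps) * (1 - pb) else 0)
        + (1 - ps) * pb * exp (- lam) * ((lam * z) ^ i / fact i)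
        + (if i = 1 then ps * (1 - pb) * z else 0)
        + ps * pb * exp (- lam) * z * (if i = 0 then 0 else (lam * z) ^ (i - 1) / fact (i - 1)))"
  proof
    fix i :: nat
    consider "i = 0" | "i = 1" | k where "i = Suc (Suc k)" by (cases i; cases "i - 1") auto
    then show "beta ps pb lam i / fact i * z ^ i = (if i = 0 then (1 - ps) * (1 - pb) else 0)
        + (1 - ps) * pb * exp (- lam) * ((lam * z) ^ i / fact i)
        + (if i = 1 then ps * (1 - pb) * z else 0)
        + ps * pb * exp (- lam) * z * (if i = 0 then 0 else (lam * z) ^ (i - 1) / fact (i - 1))"
    proof cases
      case 1 then show ?thesis by (simp add: beta_def algebra_simps)
    next
      case 2 then show ?thesis by (simp add: beta_def algebra_simps)
    next
      case 3
      have f: "(fact (Suc (Suc k)) :: real) = real (Suc (Suc k)) * fact (Suc k)" by (rule fact_Suc)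
      show ?thesis using 3 unfolding beta_def f
        by (simp add: field_simps power_mult_distrib f del: of_nat_Suc fact_Suc)
    qed
  qed
  moreover have "(1 - ps) * (1 - pb) + (1 - ps) * pb * exp (- lam) * exp (lam * z) + ps * (1 - pb) * z
        + ps * pb * exp (- lam) * z * exp (lam * z)
      = (1 - ps + ps * z) * (1 - pb + pb * exp (- lam) * exp (lam * z))"
    by (simp add: algebra_simps)
  ultimately show ?thesis using S by simp
qed


lemma gz_bounds:
  fixes ps pb lam z :: real
  assumes "0 \<le> ps" "ps \<le> 1" "0 \<le> pb" "pb \<le> 1" "0 \<le> lam" "0 \<le> z" "z \<le> 1"
  shows "0 \<le> (1 - ps + ps * z) * (1 - pb + pb * exp (- lam) * exp (lam * z))"
    "(1 - ps + ps * z) * (1 - pb + pb * exp (- lam) * exp (lam * z)) \<le> 1"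
proof -
  have e: "exp (- lam) * exp (lam * z) = exp (lam * (z - 1))" by (simp add: exp_add[symmetric] algebra_simps)
  have e1: "exp (lam * (z - 1)) \<le> 1" using assms by (simp add: mult_nonneg_nonpos)
  have p1: "0 \<le> ps * z" using assms by simp
  have p2: "ps * z \<le> ps" using assms by (simp add: mult_left_le)
  have a0: "0 \<le> 1 - ps + ps * z" and a1: "1 - ps + ps * z \<le> 1"
    using assms p1 p2 by linarith+
  have b0: "0 \<le> 1 - pb + pb * exp (- lam) * exp (lam * z)" using assms by (simp add: e)
  have b1: "1 - pb + pb * exp (- lam) * exp (lam * z) \<le> 1"
    unfolding mult.assoc e using assms e1 by (simp add: mult_left_le)
  show "0 \<le> (1 - ps + ps * z) * (1 - pb + pb * exp (- lam) * exp (lam * z))" using a0 b0 by simp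
  show "(1 - ps + ps * z) * (1 - pb + pb * exp (- lam) * exp (lam * z)) \<le> 1"
    using a0 a1 b0 b1 by (simp add: mult_le_one)
qed

lemma beta_bound:
  fixes ps pb lam :: real
  assumes "0 \<le> ps" "ps \<le> 1" "0 \<le> pb" "pb \<le> 1" "0 \<le> lam"
  shows "beta ps pb lam i \<le> fact i * 2 ^ i"
proof -
  let ?f = "\<lambda>i. beta ps pb lam i / fact i * (1/2) ^ i"
  have S: "?f sums ((1 - ps + ps * (1/2)) * (1 - pb + pb * exp (- lam) * exp (lam * (1/2))))"
    by (rule gz_sums)
  have nn: "0 \<le> ?f n" for n using beta_nonneg[OF assms] by simp
  have "sum ?f {i} \<le> suminf ?f" by (rule sum_le_suminf) (use S nn in \<open>auto simp: sums_summable\<close>)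
  also have "suminf ?f \<le> 1" using gz_bounds[OF assms, of "1/2"] sums_unique[OF S] by simp
  finally have "beta ps pb lam i / fact i * (1/2) ^ i \<le> 1" by simp
  then show ?thesis by (simp add: field_simps)
qed

lemma G_series:
  fixes ps pb lam :: "'a \<Rightarrow> real"
  assumes psp: "prob_space s" and ss: "sets s = sets XM"
    and ps_meas: "ps \<in> borel_measurable XM" and ps_range: "\<forall>x\<in>space XM. 0 \<le> ps x \<and> ps x \<le> 1"
    and pb_meas: "pb \<in> borel_measurable XM" and pb_range: "\<forall>x\<in>space XM. 0 \<le> pb x \<and> pb x \<le> 1"
    and lam_meas: "lam \<in> borel_measurable XM" and lam_nonneg: "\<forall>x\<in>space XM. 0 \<le> lam x"
    and z: "0 \<le> z" "z \<le> 1"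
  shows "(\<lambda>i. (\<integral>x. beta (ps x) (pb x) (lam x) i \<partial>s) / fact i * z ^ i) sums
      (\<integral>x. (1 - ps x + ps x * z) * (1 - pb x + pb x * exp (- lam x) * exp (lam x * z)) \<partial>s)"
    "\<And>i. 0 \<le> (\<integral>x. beta (ps x) (pb x) (lam x) i \<partial>s)"
proof -
  interpret prob_space s by (rule psp)
  have sp: "space s = space XM" using ss by (rule sets_eq_imp_space_eq)
  note [measurable] = ps_meas[unfolded measurable_cong_sets[OF ss[symmetric] refl]]
    pb_meas[unfolded measurable_cong_sets[OF ss[symmetric] refl]]
    lam_meas[unfolded measurable_cong_sets[OF ss[symmetric] refl]]
  define B where "B i x = beta (ps x) (pb x) (lam x) i" for i x
  define g where "g x = (1 - ps x + ps x * z) * (1 - pb x + pb x * exp (- lam x) * exp (lam x * z))" for x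
  have rng: "0 \<le> ps x" "ps x \<le> 1" "0 \<le> pb x" "pb x \<le> 1" "0 \<le> lam x" if "x \<in> space s" for x
    using that ps_range pb_range lam_nonneg sp by auto
  have Bm[measurable]: "B i \<in> borel_measurable s" for i unfolding B_def beta_def by measurable
  have gm[measurable]: "g \<in> borel_measurable s" unfolding g_def by measurable
  have Bnn: "0 \<le> B i x" if "x \<in> space s" for i x unfolding B_def using beta_nonneg rng[OF that] by simp
  have Bb: "B i x \<le> fact i * 2 ^ i" if "x \<in> space s" for i x unfolding B_def using beta_bound rng[OF that] by simp
  have gb: "0 \<le> g x" "g x \<le> 1" if "x \<in> space s" for x unfolding g_def using gz_bounds rng[OF that] z by auto
  have Bi: "integrable s (B i)" for i
  proof (rule integrable_const_bound[where B="fact i * 2 ^ i"])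
    show "AE x in s. norm (B i x) \<le> fact i * 2 ^ i"
    proof (rule AE_I2)
      fix x assume x: "x \<in> space s"
      show "norm (B i x) \<le> fact i * 2 ^ i" using Bnn[OF x] Bb[OF x] by simp
    qed
  qed simp
  have Bti: "integrable s (\<lambda>x. B i x / fact i * z ^ i)" for i
    using Bi[of i] by (intro integrable_mult_left integrable_divide) 
  have gi: "integrable s g"
  proof (rule integrable_const_bound[where B=1])
    show "AE x in s. norm (g x) \<le> 1"
    proof (rule AE_I2)
      fix x assume x: "x \<in> space s"
      show "norm (g x) \<le> 1" using gb[OF x] by simp
    qed
  qed simp
  show bnn: "0 \<le> (\<integral>x. beta (ps x) (pb x) (lam x) i \<partial>s)" for i
    unfolding B_def[symmetric] by (rule integral_nonneg_AE) (auto intro!: AE_I2 Bnn)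
  have pt: "(\<Sum>i. ennreal (B i x / fact i * z ^ i)) = ennreal (g x)" if "x \<in> space s" for x
    by (rule suminf_ennreal_eq) (use Bnn[OF that] z gz_sums in \<open>auto simp: B_def g_def\<close>)
  have "ennreal (\<integral>x. g x \<partial>s) = (\<integral>\<^sup>+x. ennreal (g x) \<partial>s)"
    by (rule nn_integral_eq_integral[symmetric, OF gi]) (auto intro!: AE_I2 dest: gb)
  also have "\<dots> = (\<integral>\<^sup>+x. (\<Sum>i. ennreal (B i x / fact i * z ^ i)) \<partial>s)"
    by (intro nn_integral_cong) (metis pt)
  also have "\<dots> = (\<Sum>i. \<integral>\<^sup>+x. ennreal (B i x / fact i * z ^ i) \<partial>s)"
    by (rule nn_integral_suminf) measurable
  also have "\<dots> = (\<Sum>i. ennreal ((\<integral>x. B i x \<partial>s) / fact i * z ^ i))"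
  proof (rule suminf_cong)
    fix i
    have "(\<integral>\<^sup>+x. ennreal (B i x / fact i * z ^ i) \<partial>s) = ennreal (\<integral>x. B i x / fact i * z ^ i \<partial>s)"
    proof (rule nn_integral_eq_integral[OF Bti])
      show "AE x in s. 0 \<le> B i x / fact i * z ^ i"
      proof (rule AE_I2)
        fix x assume x: "x \<in> space s"
        show "0 \<le> B i x / fact i * z ^ i" using Bnn[OF x] z by simp
      qed
    qed
    also have "(\<integral>x. B i x / fact i * z ^ i \<partial>s) = (\<integral>x. B i x \<partial>s) / fact i * z ^ i" by simp
    finally show "(\<integral>\<^sup>+x. ennreal (B i x / fact i * z ^ i) \<partial>s) = ennreal ((\<integral>x. B i x \<partial>s) / fact i * z ^ i)" .
  qed
  finally have eq: "(\<Sum>i. ennreal ((\<integral>x. B i x \<partial>s) / fact i * z ^ i)) = ennreal (\<integral>x. g x \<partial>s)" ..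
  have tnn: "0 \<le> (\<integral>x. B i x \<partial>s) / fact i * z ^ i" for i using bnn[of i] z unfolding B_def by simp
  have sm: "summable (\<lambda>i. (\<integral>x. B i x \<partial>s) / fact i * z ^ i)"
    by (rule summable_suminf_not_top) (use tnn eq in auto)
  have g0: "0 \<le> (\<integral>x. g x \<partial>s)" by (rule integral_nonneg_AE) (auto intro!: AE_I2 dest: gb)
  have "ennreal (\<Sum>i. (\<integral>x. B i x \<partial>s) / fact i * z ^ i) = ennreal (\<integral>x. g x \<partial>s)"
    unfolding eq[symmetric] by (rule suminf_ennreal2[OF _ sm, symmetric]) (use tnn in auto)
  moreover have a: "0 \<le> (\<Sum>i. (\<integral>x. B i x \<partial>s) / fact i * z ^ i)" by (rule suminf_nonneg[OF sm tnn])
  ultimately have "(\<Sum>i. (\<integral>x. B i x \<partial>s) / fact i * z ^ i) = (\<integral>x. g x \<partial>s)"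
    using ennreal_inj[OF a g0] by blast
  then show "(\<lambda>i. (\<integral>x. beta (ps x) (pb x) (lam x) i \<partial>s) / fact i * z ^ i) sums
      (\<integral>x. (1 - ps x + ps x * z) * (1 - pb x + pb x * exp (- lam x) * exp (lam x * z)) \<partial>s)"
    using sm unfolding B_def g_def by (simp add: sums_iff)
qed


lemma pgfl_pred_formula:
  fixes ps pb lam :: "'a \<Rightarrow> real" and h :: "'a \<Rightarrow> real"
  assumes s_prob: "prob_space s" and s_sets: "sets s = sets XM"
    and ps_meas: "ps \<in> borel_measurable XM" and ps_range: "\<forall>x\<in>space XM. 0 \<le> ps x \<and> ps x \<le> 1"
    and fs_kernel: "fs \<in> XM \<rightarrow>\<^sub>M prob_algebra XM"
    and pb_meas: "pb \<in> borel_measurable XM" and pb_range: "\<forall>x\<in>space XM. 0 \<le> pb x \<and> pb x \<le> 1"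
    and lam_meas: "lam \<in> borel_measurable XM" and lam_nonneg: "\<forall>x\<in>space XM. 0 \<le> lam x"
    and sb_kernel: "sb \<in> XM \<rightarrow>\<^sub>M prob_algebra XM"
    and hm: "h \<in> borel_measurable XM" and hb: "\<And>x. x \<in> space XM \<Longrightarrow> 0 \<le> h x \<and> h x \<le> 1"
  shows "pgfl (iid_law XM rho s) (\<lambda>x. pgfl (bernoulli_law XM (ps x) (fs x)) h * pgfl (zip_law XM (pb x) (lam x) (sb x)) h)
    = pgfl (iid_law XM rho s) (\<lambda>x. (1 - ps x + ps x * (\<integral>y. h y \<partial>fs x)) *
          (1 - pb x + pb x * exp (- lam x) * exp (lam x * (\<integral>y. h y \<partial>sb x))))"
proof (rule pgfl_cong[OF sets_iid[OF s_prob s_sets]])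
  fix x assume x: "x \<in> space XM"
  note f = kernel_at[OF fs_kernel x] and g = kernel_at[OF sb_kernel x]
  show "pgfl (bernoulli_law XM (ps x) (fs x)) h * pgfl (zip_law XM (pb x) (lam x) (sb x)) h
    = (1 - ps x + ps x * (\<integral>y. h y \<partial>fs x)) * (1 - pb x + pb x * exp (- lam x) * exp (lam x * (\<integral>y. h y \<partial>sb x)))"
    using x ps_range pb_range lam_nonneg
    by (simp add: pgfl_bern[OF _ _ f hm hb] pgfl_zip[OF _ _ _ g hm hb])
qed

lemma card_main:
  fixes ps pb lam :: "'a \<Rightarrow> real"
  assumes s_prob: "prob_space s" and s_sets: "sets s = sets XM"
    and prev: "Pprev = iid_law XM rho s"
    and ps_meas: "ps \<in> borel_measurable XM" and ps_range: "\<forall>x\<in>space XM. 0 \<le> ps x \<and> ps x \<le> 1"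
    and fs_kernel: "fs \<in> XM \<rightarrow>\<^sub>M prob_algebra XM"
    and pb_meas: "pb \<in> borel_measurable XM" and pb_range: "\<forall>x\<in>space XM. 0 \<le> pb x \<and> pb x \<le> 1"
    and lam_meas: "lam \<in> borel_measurable XM" and lam_nonneg: "\<forall>x\<in>space XM. 0 \<le> lam x"
    and sb_kernel: "sb \<in> XM \<rightarrow>\<^sub>M prob_algebra XM"
    and pred_pp: "point_process XM Ppred"
    and pred_pgfl: "\<forall>h \<in> borel_measurable XM. (\<forall>x\<in>space XM. \<bar>h x\<bar> \<le> 1) \<longrightarrow>
        pgfl Ppred h =
        pgfl Pprev (\<lambda>x. pgfl (bernoulli_law XM (ps x) (fs x)) h
                        * pgfl (zip_law XM (pb x) (lam x) (sb x)) h)"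
  shows "card_dist Ppred n = (\<Sum>j\<le>n. bell_partial n j (\<lambda>i. \<integral>x. beta (ps x) (pb x) (lam x) i \<partial>s) *
      (\<Sum>m. if j \<le> m then fact m / (fact n * fact (m - j)) * pmf rho m *
          (\<integral>x. beta (ps x) (pb x) (lam x) 0 \<partial>s) ^ (m - j) else 0))"
proof -
  define b where "b i = (\<integral>x. beta (ps x) (pb x) (lam x) i \<partial>s)" for i
  define gz where "gz z x = (1 - ps x + ps x * z) * (1 - pb x + pb x * exp (- lam x) * exp (lam x * z))" for z x
  define G where "G z = (\<integral>x. gz z x \<partial>s)" for z
  note [measurable] = ps_meas pb_meas lam_meas
  have gzm: "gz z \<in> borel_measurable XM" for z unfolding gz_def by measurable
  have gzb: "0 \<le> gz z x \<and> gz z x \<le> 1" if "x \<in> space XM" "0 \<le> z" "z \<le> 1" for x z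
    unfolding gz_def using gz_bounds[of "ps x" "pb x" "lam x" z] that ps_range pb_range lam_nonneg by auto
  have Gs: "(\<lambda>i. b i / fact i * z ^ i) sums G z" if "0 \<le> z" "z < 1" for z
    unfolding b_def G_def gz_def
    by (rule G_series(1)[OF s_prob s_sets ps_meas ps_range pb_meas pb_range lam_meas lam_nonneg]) (use that in auto)
  have bnn: "0 \<le> b i" for i
    unfolding b_def by (rule G_series(2)[OF s_prob s_sets ps_meas ps_range pb_meas pb_range lam_meas lam_nonneg, of 0]) auto
  have rs: "summable (\<lambda>m. pmf rho m * G z ^ m)" if "0 \<le> z" "z < 1" for z
    unfolding G_def by (rule pgfl_iid_real(1)[OF s_prob s_sets gzm]) (use gzb that in auto)
  have cs: "(\<lambda>n. card_dist Ppred n * z ^ n) sums (\<Sum>m. pmf rho m * G z ^ m)" if z: "0 \<le> z" "z < 1" for z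
  proof -
    have cm: "(\<lambda>_. z) \<in> borel_measurable XM" by simp
    have cb: "\<And>x. x \<in> space XM \<Longrightarrow> 0 \<le> z \<and> z \<le> 1" using z by simp
    have "pgfl Ppred (\<lambda>_. z) = pgfl Pprev (\<lambda>x. pgfl (bernoulli_law XM (ps x) (fs x)) (\<lambda>_. z)
                        * pgfl (zip_law XM (pb x) (lam x) (sb x)) (\<lambda>_. z))"
      using pred_pgfl z by auto
    also have "\<dots> = pgfl Pprev (\<lambda>x. (1 - ps x + ps x * (\<integral>y. z \<partial>fs x)) *
          (1 - pb x + pb x * exp (- lam x) * exp (lam x * (\<integral>y. z \<partial>sb x))))"
      unfolding prev by (rule pgfl_pred_formula[OF s_prob s_sets ps_meas ps_range fs_kernel pb_meas pb_range
        lam_meas lam_nonneg sb_kernel cm cb])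
    also have "\<dots> = pgfl Pprev (gz z)"
      unfolding prev
      apply (rule pgfl_cong[OF sets_iid[OF s_prob s_sets]])
      subgoal for x using kernel_at[OF fs_kernel, of x] kernel_at[OF sb_kernel, of x]
        by (simp add: gz_def prob_space.prob_space)
      done
    also have "\<dots> = (\<Sum>m. pmf rho m * G z ^ m)"
      unfolding prev G_def by (rule pgfl_iid_real(2)[OF s_prob s_sets gzm]) (use gzb z in auto)
    finally show ?thesis using pgfl_const_card[OF pred_pp, of z] z by simp
  qed
  have "card_dist Ppred n = (\<Sum>j\<le>n. bell_partial n j b *
      (\<Sum>m. if j \<le> m then fact m / (fact n * fact (m - j)) * pmf rho m * b 0 ^ (m - j) else 0))"
    by (rule card_algebra[where G=G, OF bnn pmf_nonneg _ Gs rs cs]) (auto simp: card_dist_def)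
  then show ?thesis unfolding b_def .
qed


lemma exp_ratio_mono:
  fixes beta s t :: real
  assumes b: "0 \<le> beta" and s: "0 < s" and st: "s \<le> t"
  shows "(1 - exp (- (t * beta))) / t \<le> (1 - exp (- (s * beta))) / s"
proof -
  define th where "th = s / t"
  have t: "0 < t" using s st by simp
  have th0: "0 \<le> th" "th \<le> 1" using s st t by (auto simp: th_def)
  have conv: "exp ((1 - th) *\<^sub>R 0 + th *\<^sub>R (- (t * beta))) \<le> (1 - th) * exp 0 + th * exp (- (t * beta))"
    by (rule convex_onD[OF exp_convex th0]) auto
  have eq: "(1 - th) *\<^sub>R 0 + th *\<^sub>R (- (t * beta)) = - (s * beta)"
  proof -
    have "th * t = s" using t by (simp add: th_def)
    then have "th * (t * beta) = s * beta" by (simp add: mult.assoc[symmetric])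
    then show ?thesis by simp
  qed
  have "exp (- (s * beta)) \<le> (1 - th) * exp 0 + th * exp (- (t * beta))"
    using conv unfolding eq .
  then have "exp (- (s * beta)) \<le> 1 - th + th * exp (- (t * beta))" by simp
  then have "th * (1 - exp (- (t * beta))) \<le> 1 - exp (- (s * beta))" by (simp add: algebra_simps)
  then have "s * ((1 - exp (- (t * beta))) / t) \<le> 1 - exp (- (s * beta))"
    by (simp add: th_def)
  then show ?thesis using s by (simp add: field_simps)
qed

lemma exp_ratio_bounds:
  fixes beta t :: real
  assumes b: "0 \<le> beta" and t: "0 < t"
  shows "0 \<le> (1 - exp (- (t * beta))) / t" "(1 - exp (- (t * beta))) / t \<le> beta"
    "(1 - exp (- (t * beta))) / t \<le> 1 / t"
proof -
  have "exp (- (t * beta)) \<le> 1" using b t by simp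
  then show "0 \<le> (1 - exp (- (t * beta))) / t" using t by simp
  have "1 + (- (t * beta)) \<le> exp (- (t * beta))" by (rule exp_ge_add_one_self)
  then have "1 - exp (- (t * beta)) \<le> t * beta" by simp
  then show "(1 - exp (- (t * beta))) / t \<le> beta" using t by (simp add: field_simps)
  have "0 < exp (- (t * beta))" by simp
  then show "(1 - exp (- (t * beta))) / t \<le> 1 / t" using t by (simp add: divide_right_mono)
qed

lemma exp_ratio_lim:
  fixes beta :: real and t :: "nat \<Rightarrow> real"
  assumes t0: "t \<longlonglongrightarrow> 0" and tp: "\<And>k. 0 < t k"
  shows "(\<lambda>k. (1 - exp (- (t k * beta))) / t k) \<longlonglongrightarrow> beta"
proof -
  have "((\<lambda>x. exp (- (x * beta))) has_real_derivative (exp (- (0 * beta)) * (- beta))) (at 0)"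
    by (auto intro!: derivative_eq_intros)
  then have "((\<lambda>h. (exp (- ((0 + h) * beta)) - exp (- (0 * beta))) / h) \<longlongrightarrow> - beta) (at 0)"
    by (simp add: DERIV_def)
  then have d: "((\<lambda>h. (exp (- (h * beta)) - 1) / h) \<longlongrightarrow> - beta) (at 0)" by simp
  have ft: "filterlim t (at 0) sequentially"
    by (rule filterlim_atI[OF t0]) (use tp in \<open>auto intro!: always_eventually simp: less_imp_neq[symmetric]\<close>)
  have "(\<lambda>k. (exp (- (t k * beta)) - 1) / t k) \<longlonglongrightarrow> - beta"
    using filterlim_compose[OF d ft] by (simp add: o_def)
  then have "(\<lambda>k. - ((exp (- (t k * beta)) - 1) / t k)) \<longlonglongrightarrow> - (- beta)" by (rule tendsto_minus)
  then show ?thesis by (simp add: minus_divide_left)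
qed

lemma SUP_mult_incseq:
  fixes x y :: "nat \<Rightarrow> ennreal"
  assumes x: "incseq x" and y: "incseq y"
  shows "(SUP k. x k * y k) = (SUP k. x k) * (SUP k. y k)"
proof (rule antisym)
  show "(SUP k. x k * y k) \<le> (SUP k. x k) * (SUP k. y k)"
    by (rule SUP_least) (intro mult_mono SUP_upper; simp)
  have "(SUP k. x k) * (SUP k. y k) = (SUP j. SUP i. x i * y j)"
    by (simp add: SUP_mult_left_ennreal SUP_mult_right_ennreal)
  also have "\<dots> \<le> (SUP k. x k * y k)"
  proof (intro SUP_least)
    fix i j
    have "x i * y j \<le> x (max i j) * y (max i j)"
      by (intro mult_mono) (auto intro: incseqD[OF x] incseqD[OF y])
    also have "\<dots> \<le> (SUP k. x k * y k)" by (rule SUP_upper) simp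
    finally show "x i * y j \<le> (SUP k. x k * y k)" .
  qed
  finally show "(SUP k. x k) * (SUP k. y k) \<le> (SUP k. x k * y k)" .
qed

lemma SUP_incseq_lim:
  fixes f :: "nat \<Rightarrow> real"
  assumes "incseq f" "f \<longlonglongrightarrow> l" "\<And>k. 0 \<le> f k"
  shows "(SUP k. ennreal (f k)) = ennreal l"
proof (rule SUP_Lim)
  show "incseq (\<lambda>k. ennreal (f k))" using assms(1) by (auto simp: incseq_def intro: ennreal_leI)
  show "(\<lambda>k. ennreal (f k)) \<longlonglongrightarrow> ennreal l" using assms(2) by (rule tendsto_ennrealI)
qed


definition tt :: "nat \<Rightarrow> real" where "tt k = inverse (real (Suc (Suc k)))"

lemma tt_pos: "0 < tt k" and tt_le: "tt k \<le> 1/2" and tt_dec: "tt (Suc k) \<le> tt k"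
  and tt_lim: "tt \<longlonglongrightarrow> 0"
proof -
  show "0 < tt k" by (simp add: tt_def)
  show "tt k \<le> 1/2" by (simp add: tt_def field_simps)
  show "tt (Suc k) \<le> tt k" by (simp add: tt_def field_simps)
  show "tt \<longlonglongrightarrow> 0" unfolding tt_def using LIMSEQ_Suc[OF LIMSEQ_inverse_real_of_nat] by simp
qed

lemma tt_decseq: "i \<le> j \<Longrightarrow> tt j \<le> tt i"
  by (simp add: tt_def field_simps)

lemma prod_mset_indic: fixes t :: real shows "prod_mset (image_mset (\<lambda>x. 1 - t * indicator B x) M) = (1 - t) ^ cnt B M"
  by (induction M) (auto simp: indicator_def)

lemma geom_sum_eq: "0 < t \<Longrightarrow> (\<Sum>i<n. (1 - t) ^ i) = (1 - (1 - t) ^ n) / (t::real)"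
  using one_diff_power_eq[of "1 - t" n] by (simp add: field_simps)

lemma lhs_eq:
  assumes pp: "point_process X P" and B: "B \<in> sets X" and t: "0 < t" "t \<le> 1"
  shows "(\<integral>\<^sup>+M. ennreal (\<Sum>i<cnt B M. (1 - t) ^ i) \<partial>P) = ennreal ((1 - pgfl P (\<lambda>x. 1 - t * indicator B x)) / t)"
proof -
  have ps: "prob_space P" and sP: "sets P = sets (cfgM X)" using pp by (auto simp: point_process_def)
  interpret prob_space P by (rule ps)
  have cm: "cnt B \<in> P \<rightarrow>\<^sub>M count_space UNIV"
    unfolding measurable_cong_sets[OF sP refl] by (rule cnt_meas[OF B])
  define q where "q M = (1 - (1 - t) ^ cnt B M) / t" for M
  define e where "e M = (1 - t) ^ cnt B M" for M
  have qm: "q \<in> borel_measurable P"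
    unfolding q_def by (rule measurable_compose[OF cm]) simp
  have em: "e \<in> borel_measurable P"
    unfolding e_def by (rule measurable_compose[OF cm]) simp
  have eb: "0 \<le> e M" "e M \<le> 1" for M using t by (auto simp: e_def power_le_one)
  have qb: "0 \<le> q M" "q M \<le> 1 / t" for M using eb[of M] t by (auto simp: q_def e_def[symmetric] divide_right_mono)
  have ei: "integrable P e"
    by (rule integrable_const_bound[where B=1]) (use eb em in auto)
  have qi: "integrable P q"
    by (rule integrable_const_bound[where B="1/t"]) (use qb qm in auto)
  have "(\<integral>\<^sup>+M. ennreal (\<Sum>i<cnt B M. (1 - t) ^ i) \<partial>P) = (\<integral>\<^sup>+M. ennreal (q M) \<partial>P)"
    by (simp add: q_def geom_sum_eq[OF t(1)])
  also have "\<dots> = ennreal (\<integral>M. q M \<partial>P)"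
    by (rule nn_integral_eq_integral[OF qi]) (use qb in auto)
  also have "(\<integral>M. q M \<partial>P) = (1 - (\<integral>M. e M \<partial>P)) / t"
  proof -
    have "(\<integral>M. q M \<partial>P) = (\<integral>M. (1 - e M) \<partial>P) / t" by (simp add: q_def e_def)
    also have "(\<integral>M. (1 - e M) \<partial>P) = (\<integral>M. 1 \<partial>P) - (\<integral>M. e M \<partial>P)"
      by (rule Bochner_Integration.integral_diff) (use ei in auto)
    finally show ?thesis by (simp add: prob_space)
  qed
  also have "(\<integral>M. e M \<partial>P) = pgfl P (\<lambda>x. 1 - t * indicator B x)"
    unfolding pgfl_def e_def by (simp add: prod_mset_indic)
  finally show ?thesis .
qed

lemma lhs_sup:
  assumes pp: "point_process X P" and B: "B \<in> sets X"
  shows "(SUP k. \<integral>\<^sup>+M. ennreal (\<Sum>i<cnt B M. (1 - tt k) ^ i) \<partial>P) = intensity P B"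
proof -
  have sP: "sets P = sets (cfgM X)" using pp by (auto simp: point_process_def)
  have cm: "cnt B \<in> P \<rightarrow>\<^sub>M count_space UNIV"
    unfolding measurable_cong_sets[OF sP refl] by (rule cnt_meas[OF B])
  define F where "F k M = ennreal (\<Sum>i<cnt B M. (1 - tt k) ^ i)" for k M
  have mono1: "(\<Sum>i<n. (1 - tt k) ^ i) \<le> (\<Sum>i<n. (1 - tt (Suc k)) ^ i)" for n k
    by (intro sum_mono power_mono) (use tt_dec[of k] tt_le[of k] in auto)
  have inc: "incseq F"
    by (rule incseq_SucI) (auto simp: le_fun_def F_def intro!: ennreal_leI mono1)
  have Fm: "F k \<in> borel_measurable P" for k
    unfolding F_def by (rule measurable_compose[OF cm]) simp
  have sup: "(SUP k. F k M) = of_nat (cnt B M)" for M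
  proof -
    have "(SUP k. ennreal (\<Sum>i<cnt B M. (1 - tt k) ^ i)) = ennreal (\<Sum>i<cnt B M. (1 - 0) ^ i)"
    proof (rule SUP_incseq_lim)
      show "incseq (\<lambda>k. \<Sum>i<cnt B M. (1 - tt k) ^ i)" by (rule incseq_SucI) (rule mono1)
      show "(\<lambda>k. \<Sum>i<cnt B M. (1 - tt k) ^ i) \<longlonglongrightarrow> (\<Sum>i<cnt B M. (1 - 0) ^ i)"
        by (intro tendsto_intros tt_lim)
      show "0 \<le> (\<Sum>i<cnt B M. (1 - tt k) ^ i)" for k
        by (intro sum_nonneg zero_le_power) (use tt_le[of k] in auto)
    qed
    then show ?thesis by (simp add: F_def ennreal_of_nat_eq_real_of_nat)
  qed
  have "intensity P B = (\<integral>\<^sup>+M. (SUP k. F k M) \<partial>P)" unfolding intensity_def sup ..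
  also have "\<dots> = (SUP k. integral\<^sup>N P (F k))"
    by (rule nn_integral_monotone_convergence_SUP[OF inc Fm])
  finally show ?thesis unfolding F_def by simp
qed

lemma rhs_series:
  fixes r :: "nat \<Rightarrow> real"
  assumes r1: "r sums 1" and rnn: "\<And>m. 0 \<le> r m" and c: "0 \<le> c" "c \<le> 1"
    and t: "0 < t" and A: "0 \<le> A" and cA: "1 - c = t * A"
  shows "ennreal ((1 - (\<Sum>m. r m * c ^ m)) / t) = (\<Sum>m. ennreal (r m * A * (\<Sum>i<m. c ^ i)))"
proof -
  have sm: "summable (\<lambda>m. r m * c ^ m)"
  proof (rule summable_comparison_test'[OF sums_summable[OF r1]])
    fix m show "norm (r m * c ^ m) \<le> r m" using rnn[of m] c by (simp add: mult_left_le power_le_one)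
  qed
  have "(\<lambda>m. r m - r m * c ^ m) sums (1 - (\<Sum>m. r m * c ^ m))"
    by (rule sums_diff[OF r1 summable_sums[OF sm]])
  moreover have "(\<lambda>m. r m - r m * c ^ m) = (\<lambda>m. t * (r m * A * (\<Sum>i<m. c ^ i)))"
  proof
    fix m
    have e: "1 - c ^ m = (t * A) * (\<Sum>i<m. c ^ i)" unfolding cA[symmetric] by (rule one_diff_power_eq)
    have "r m - r m * c ^ m = r m * (1 - c ^ m)" by (simp add: right_diff_distrib)
    also have "\<dots> = t * (r m * A * (\<Sum>i<m. c ^ i))" unfolding e by (simp add: mult_ac)
    finally show "r m - r m * c ^ m = t * (r m * A * (\<Sum>i<m. c ^ i))" .
  qed
  ultimately have "(\<lambda>m. t * (r m * A * (\<Sum>i<m. c ^ i))) sums (1 - (\<Sum>m. r m * c ^ m))" by simp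
  then have "(\<lambda>m. t * (r m * A * (\<Sum>i<m. c ^ i)) / t) sums ((1 - (\<Sum>m. r m * c ^ m)) / t)"
    by (rule sums_divide)
  then have S: "(\<lambda>m. r m * A * (\<Sum>i<m. c ^ i)) sums ((1 - (\<Sum>m. r m * c ^ m)) / t)" using t by simp
  show ?thesis
    by (rule suminf_ennreal_eq[symmetric, OF _ S]) (use rnn A c in \<open>auto intro!: mult_nonneg_nonneg sum_nonneg\<close>)
qed

lemma rhs_sup:
  fixes r A c :: "nat \<Rightarrow> real"
  assumes rnn: "\<And>m. 0 \<le> r m" and Ainc: "incseq A" and Ann: "\<And>k. 0 \<le> A k"
    and Asup: "(SUP k. ennreal (A k)) = Aenn"
    and cinc: "incseq c" and cnn: "\<And>k. 0 \<le> c k" and clim: "c \<longlonglongrightarrow> 1"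
  shows "(SUP k. \<Sum>m. ennreal (r m * A k * (\<Sum>i<m. c k ^ i))) = (\<Sum>m. ennreal (real m * r m)) * Aenn"
proof -
  define S where "S m k = (\<Sum>i<m. c k ^ i)" for m k
  have Snn: "0 \<le> S m k" for m k unfolding S_def using cnn by (auto intro!: sum_nonneg)
  have Sinc: "incseq (S m)" for m
    unfolding S_def incseq_def by (auto intro!: sum_mono power_mono incseqD[OF cinc] cnn)
  have Ssup: "(SUP k. ennreal (S m k)) = ennreal (real m)" for m
  proof -
    have "(SUP k. ennreal (S m k)) = ennreal (\<Sum>i<m. 1 ^ i)"
      by (rule SUP_incseq_lim[OF Sinc _ Snn]) (unfold S_def, intro tendsto_intros clim)
    then show ?thesis by simp
  qed
  have T: "ennreal (r m * A k * S m k) = ennreal (r m) * (ennreal (A k) * ennreal (S m k))" for m k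
    using rnn Ann Snn by (simp add: ennreal_mult mult.assoc)
  have Tinc: "incseq (\<lambda>k. ennreal (r m * A k * S m k))" for m
    unfolding incseq_def
    by (auto intro!: ennreal_leI mult_left_mono mult_mono incseqD[OF Ainc] incseqD[OF Sinc] rnn Ann Snn mult_nonneg_nonneg)
  have "(SUP k. \<Sum>m. ennreal (r m * A k * S m k)) = (\<Sum>m. SUP k. ennreal (r m * A k * S m k))"
    by (rule ennreal_suminf_SUP_eq[symmetric]) (rule Tinc)
  also have "\<dots> = (\<Sum>m. ennreal (real m * r m) * Aenn)"
  proof (rule suminf_cong)
    fix m
    have "(SUP k. ennreal (r m * A k * S m k)) = ennreal (r m) * (SUP k. ennreal (A k) * ennreal (S m k))"
      unfolding T by (simp add: SUP_mult_left_ennreal)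
    also have "(SUP k. ennreal (A k) * ennreal (S m k)) = (SUP k. ennreal (A k)) * (SUP k. ennreal (S m k))"
      by (rule SUP_mult_incseq) (use Ainc Sinc[of m] in \<open>auto simp: incseq_def intro: ennreal_leI\<close>)
    finally show "(SUP k. ennreal (r m * A k * S m k)) = ennreal (real m * r m) * Aenn"
      unfolding Asup Ssup using rnn[of m] by (simp add: ennreal_mult' mult_ac)
  qed
  also have "\<dots> = (\<Sum>m. ennreal (real m * r m)) * Aenn" by simp
  finally show ?thesis unfolding S_def .
qed


definition uR :: "real \<Rightarrow> real \<Rightarrow> nat \<Rightarrow> real" where
  "uR p b k = 1 - p + p * exp (- (tt k * b))"
definition phiR :: "real \<Rightarrow> real \<Rightarrow> real \<Rightarrow> nat \<Rightarrow> real" where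
  "phiR a p b k = a * uR p b k + p * ((1 - exp (- (tt k * b))) / tt k)"
definition gR :: "real \<Rightarrow> real \<Rightarrow> real \<Rightarrow> nat \<Rightarrow> real" where
  "gR a p b k = (1 - tt k * a) * uR p b k"

context
  fixes a p b :: real
  assumes a: "0 \<le> a" "a \<le> 1" and p: "0 \<le> p" "p \<le> 1" and b: "0 \<le> b"
begin

lemma uR_bnd: "0 \<le> uR p b k" "uR p b k \<le> 1"
proof -
  have e: "0 < exp (- (tt k * b))" "exp (- (tt k * b)) \<le> 1" using b tt_pos[of k] by auto
  have "p * exp (- (tt k * b)) \<le> p" using e p by (simp add: mult_left_le)
  moreover have "0 \<le> p * exp (- (tt k * b))" using e p by simp
  ultimately show "0 \<le> uR p b k" "uR p b k \<le> 1" using p by (auto simp: uR_def)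
qed

lemma uR_mono: "uR p b k \<le> uR p b (Suc k)"
proof -
  have "tt (Suc k) * b \<le> tt k * b" using tt_dec[of k] b by (simp add: mult_right_mono)
  then have "exp (- (tt k * b)) \<le> exp (- (tt (Suc k) * b))" by simp
  then show ?thesis using p by (simp add: uR_def mult_left_mono)
qed

lemma uR_lim: "(\<lambda>k. uR p b k) \<longlonglongrightarrow> 1"
proof -
  have "(\<lambda>k. 1 - p + p * exp (- (tt k * b))) \<longlonglongrightarrow> 1 - p + p * exp (- (0 * b))"
    by (intro tendsto_intros tt_lim)
  then show ?thesis by (simp add: uR_def)
qed

lemma gR_bnd: "0 \<le> gR a p b k" "gR a p b k \<le> 1"
proof -
  have t: "0 \<le> 1 - tt k * a" "1 - tt k * a \<le> 1"
    using tt_pos[of k] tt_le[of k] a by (auto intro: order.trans[OF mult_right_le_one_le[of "tt k" a]] simp: mult_le_one)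
  show "0 \<le> gR a p b k" "gR a p b k \<le> 1" using t uR_bnd[of k] by (auto simp: gR_def mult_le_one)
qed

lemma gR_mono: "gR a p b k \<le> gR a p b (Suc k)"
proof -
  have "tt (Suc k) * a \<le> tt k * a" using tt_dec[of k] a by (simp add: mult_right_mono)
  then have "1 - tt k * a \<le> 1 - tt (Suc k) * a" by simp
  moreover have "0 \<le> 1 - tt k * a"
  proof -
    have "tt k * a \<le> tt k" using a tt_pos[of k] by (simp add: mult_left_le)
    then show ?thesis using tt_le[of k] by linarith
  qed
  ultimately show ?thesis using uR_mono[of k] uR_bnd[of k] unfolding gR_def by (intro mult_mono) auto
qed

lemma gR_lim: "(\<lambda>k. gR a p b k) \<longlonglongrightarrow> 1"
proof -
  have "(\<lambda>k. (1 - tt k * a) * uR p b k) \<longlonglongrightarrow> (1 - 0 * a) * 1"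
    by (intro tendsto_intros tt_lim uR_lim)
  then show ?thesis by (simp add: gR_def)
qed

lemma phiR_bnd: "0 \<le> phiR a p b k" "phiR a p b k \<le> 1 + 1 / tt k"
proof -
  note r = exp_ratio_bounds[OF b tt_pos[of k]]
  have "a * uR p b k \<le> 1" using a uR_bnd[of k] by (simp add: mult_le_one)
  moreover have "p * ((1 - exp (- (tt k * b))) / tt k) \<le> 1 / tt k"
    using p r by (metis mult_left_le_one_le order.trans)
  moreover have "0 \<le> a * uR p b k" using a uR_bnd[of k] by simp
  moreover have "0 \<le> p * ((1 - exp (- (tt k * b))) / tt k)" using mult_nonneg_nonneg[OF p(1) r(1)] .
  ultimately show "0 \<le> phiR a p b k" "phiR a p b k \<le> 1 + 1 / tt k" by (auto simp: phiR_def)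
qed

lemma phiR_mono: "phiR a p b k \<le> phiR a p b (Suc k)"
proof -
  have "a * uR p b k \<le> a * uR p b (Suc k)" using a uR_mono[of k] by (simp add: mult_left_mono)
  moreover have "(1 - exp (- (tt k * b))) / tt k \<le> (1 - exp (- (tt (Suc k) * b))) / tt (Suc k)"
    by (rule exp_ratio_mono[OF b tt_pos tt_dec])
  then have "p * ((1 - exp (- (tt k * b))) / tt k) \<le> p * ((1 - exp (- (tt (Suc k) * b))) / tt (Suc k))"
    by (rule mult_left_mono) (use p in auto)
  ultimately show ?thesis by (simp add: phiR_def)
qed

lemma phiR_lim: "(\<lambda>k. phiR a p b k) \<longlonglongrightarrow> a + p * b"
proof -
  have "(\<lambda>k. a * uR p b k + p * ((1 - exp (- (tt k * b))) / tt k)) \<longlonglongrightarrow> a * 1 + p * b"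
    by (intro tendsto_intros uR_lim exp_ratio_lim tt_lim tt_pos)
  then show ?thesis by (simp add: phiR_def)
qed

lemma gR_phiR: "gR a p b k = 1 - tt k * phiR a p b k"
proof -
  have t: "tt k \<noteq> 0" using tt_pos[of k] by simp
  show ?thesis using t by (simp add: gR_def phiR_def uR_def field_simps)
qed

end


lemma Ac_props:
  fixes al p be :: "'a \<Rightarrow> real"
  assumes psp: "prob_space s"
    and [measurable]: "al \<in> borel_measurable s" "p \<in> borel_measurable s" "be \<in> borel_measurable s"
    and rng: "\<And>x. x \<in> space s \<Longrightarrow> 0 \<le> al x \<and> al x \<le> 1 \<and> 0 \<le> p x \<and> p x \<le> 1 \<and> 0 \<le> be x"
  shows "incseq (\<lambda>k. \<integral>x. phiR (al x) (p x) (be x) k \<partial>s)"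
    "\<And>k. 0 \<le> (\<integral>x. phiR (al x) (p x) (be x) k \<partial>s)"
    "(SUP k. ennreal (\<integral>x. phiR (al x) (p x) (be x) k \<partial>s)) = (\<integral>\<^sup>+x. ennreal (al x + p x * be x) \<partial>s)"
    "incseq (\<lambda>k. \<integral>x. gR (al x) (p x) (be x) k \<partial>s)"
    "\<And>k. 0 \<le> (\<integral>x. gR (al x) (p x) (be x) k \<partial>s)"
    "\<And>k. (\<integral>x. gR (al x) (p x) (be x) k \<partial>s) \<le> 1"
    "(\<lambda>k. \<integral>x. gR (al x) (p x) (be x) k \<partial>s) \<longlonglongrightarrow> 1"
    "\<And>k. 1 - (\<integral>x. gR (al x) (p x) (be x) k \<partial>s) = tt k * (\<integral>x. phiR (al x) (p x) (be x) k \<partial>s)"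
proof -
  interpret prob_space s by (rule psp)
  define ph where "ph k x = phiR (al x) (p x) (be x) k" for k x
  define g where "g k x = gR (al x) (p x) (be x) k" for k x
  have phm[measurable]: "ph k \<in> borel_measurable s" for k unfolding ph_def phiR_def uR_def by measurable
  have gm[measurable]: "g k \<in> borel_measurable s" for k unfolding g_def gR_def uR_def by measurable
  have R: "0 \<le> al x" "al x \<le> 1" "0 \<le> p x" "p x \<le> 1" "0 \<le> be x" if "x \<in> space s" for x
    using rng[OF that] by auto
  have phb: "0 \<le> ph k x" "ph k x \<le> 1 + 1 / tt k" if "x \<in> space s" for x k
    unfolding ph_def using phiR_bnd[OF R[OF that]] by auto
  have phmono: "ph k x \<le> ph (Suc k) x" if "x \<in> space s" for x k
    unfolding ph_def using phiR_mono[OF R[OF that]] by auto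
  have phlim: "(\<lambda>k. ph k x) \<longlonglongrightarrow> al x + p x * be x" if "x \<in> space s" for x
    unfolding ph_def using phiR_lim[OF R[OF that]] by auto
  have gb: "0 \<le> g k x" "g k x \<le> 1" if "x \<in> space s" for x k
    unfolding g_def using gR_bnd[OF R[OF that]] by auto
  have gmono: "g k x \<le> g (Suc k) x" if "x \<in> space s" for x k
    unfolding g_def using gR_mono[OF R[OF that]] by auto
  have glim: "(\<lambda>k. g k x) \<longlonglongrightarrow> 1" if "x \<in> space s" for x
    unfolding g_def using gR_lim[OF R[OF that]] by auto
  have gph: "g k x = 1 - tt k * ph k x" if "x \<in> space s" for x k
    unfolding g_def ph_def using gR_phiR[OF R[OF that]] by auto
  have phi: "integrable s (ph k)" for k
  proof (rule integrable_const_bound[where B="1 + 1 / tt k"])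
    show "AE x in s. norm (ph k x) \<le> 1 + 1 / tt k"
    proof (rule AE_I2)
      fix x assume x: "x \<in> space s"
      show "norm (ph k x) \<le> 1 + 1 / tt k" using phb[OF x, of k] by simp
    qed
  qed simp
  have gi: "integrable s (g k)" for k
  proof (rule integrable_const_bound[where B=1])
    show "AE x in s. norm (g k x) \<le> 1"
    proof (rule AE_I2)
      fix x assume x: "x \<in> space s"
      show "norm (g k x) \<le> 1" using gb[OF x, of k] by simp
    qed
  qed simp
  show "incseq (\<lambda>k. \<integral>x. phiR (al x) (p x) (be x) k \<partial>s)"
    unfolding ph_def[symmetric]
    by (rule incseq_SucI, rule integral_mono_AE[OF phi phi]) (auto intro!: AE_I2 phmono)
  show A0: "0 \<le> (\<integral>x. phiR (al x) (p x) (be x) k \<partial>s)" for k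
    unfolding ph_def[symmetric] by (rule integral_nonneg_AE) (auto intro!: AE_I2 phb)
  have "(SUP k. ennreal (\<integral>x. ph k x \<partial>s)) = (SUP k. \<integral>\<^sup>+x. ennreal (ph k x) \<partial>s)"
  proof (rule SUP_cong[OF refl])
    fix k
    show "ennreal (\<integral>x. ph k x \<partial>s) = (\<integral>\<^sup>+x. ennreal (ph k x) \<partial>s)"
      by (rule nn_integral_eq_integral[symmetric, OF phi]) (auto intro!: AE_I2 phb)
  qed
  also have "\<dots> = (\<integral>\<^sup>+x. (SUP k. ennreal (ph k x)) \<partial>s)"
    by (rule nn_integral_monotone_convergence_SUP_AE[symmetric]) (auto intro!: AE_I2 ennreal_leI phmono)
  also have "\<dots> = (\<integral>\<^sup>+x. ennreal (al x + p x * be x) \<partial>s)"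
  proof (rule nn_integral_cong)
    fix x assume x: "x \<in> space s"
    show "(SUP k. ennreal (ph k x)) = ennreal (al x + p x * be x)"
      by (rule SUP_incseq_lim) (auto intro: incseq_SucI phmono[OF x] phlim[OF x] phb[OF x])
  qed
  finally show "(SUP k. ennreal (\<integral>x. phiR (al x) (p x) (be x) k \<partial>s)) = (\<integral>\<^sup>+x. ennreal (al x + p x * be x) \<partial>s)"
    unfolding ph_def .
  show cinc: "incseq (\<lambda>k. \<integral>x. gR (al x) (p x) (be x) k \<partial>s)"
    unfolding g_def[symmetric]
    by (rule incseq_SucI, rule integral_mono_AE[OF gi gi]) (auto intro!: AE_I2 gmono)
  show c0: "0 \<le> (\<integral>x. gR (al x) (p x) (be x) k \<partial>s)" for k
    unfolding g_def[symmetric] by (rule integral_nonneg_AE) (auto intro!: AE_I2 gb)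
  show "(\<integral>x. gR (al x) (p x) (be x) k \<partial>s) \<le> 1" for k
  proof -
    have "(\<integral>x. g k x \<partial>s) \<le> (\<integral>x. 1 \<partial>s)"
      by (rule integral_mono_AE[OF gi]) (auto intro!: AE_I2 gb)
    then show ?thesis by (simp add: g_def prob_space)
  qed
  have "(SUP k. ennreal (\<integral>x. g k x \<partial>s)) = (SUP k. \<integral>\<^sup>+x. ennreal (g k x) \<partial>s)"
  proof (rule SUP_cong[OF refl])
    fix k
    show "ennreal (\<integral>x. g k x \<partial>s) = (\<integral>\<^sup>+x. ennreal (g k x) \<partial>s)"
      by (rule nn_integral_eq_integral[symmetric, OF gi]) (auto intro!: AE_I2 gb)
  qed
  also have "\<dots> = (\<integral>\<^sup>+x. (SUP k. ennreal (g k x)) \<partial>s)"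
    by (rule nn_integral_monotone_convergence_SUP_AE[symmetric]) (auto intro!: AE_I2 ennreal_leI gmono)
  also have "\<dots> = (\<integral>\<^sup>+x. ennreal 1 \<partial>s)"
  proof (rule nn_integral_cong)
    fix x assume x: "x \<in> space s"
    show "(SUP k. ennreal (g k x)) = ennreal 1"
      by (rule SUP_incseq_lim) (auto intro: incseq_SucI gmono[OF x] glim[OF x] gb[OF x])
  qed
  also have "\<dots> = 1" by (simp add: emeasure_space_1)
  finally have sup1: "(SUP k. ennreal (\<integral>x. g k x \<partial>s)) = 1" .
  have "(\<lambda>k. ennreal (\<integral>x. g k x \<partial>s)) \<longlonglongrightarrow> (SUP k. ennreal (\<integral>x. g k x \<partial>s))"
    by (rule LIMSEQ_SUP) (use cinc in \<open>auto simp: incseq_def g_def intro: ennreal_leI\<close>)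
  then have "(\<lambda>k. ennreal (\<integral>x. g k x \<partial>s)) \<longlonglongrightarrow> ennreal 1" unfolding sup1 by simp
  moreover have c0': "\<And>k. 0 \<le> (\<integral>x. g k x \<partial>s)" using c0 unfolding g_def .
  ultimately have "(\<lambda>k. \<integral>x. g k x \<partial>s) \<longlonglongrightarrow> 1"
    by (subst (asm) tendsto_ennreal_iff) (auto intro: always_eventually)
  then show "(\<lambda>k. \<integral>x. gR (al x) (p x) (be x) k \<partial>s) \<longlonglongrightarrow> 1" unfolding g_def .
  show "1 - (\<integral>x. gR (al x) (p x) (be x) k \<partial>s) = tt k * (\<integral>x. phiR (al x) (p x) (be x) k \<partial>s)" for k
  proof -
    have "(\<integral>x. g k x \<partial>s) = (\<integral>x. 1 - tt k * ph k x \<partial>s)"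
      by (rule Bochner_Integration.integral_cong[OF refl]) (auto simp: gph)
    also have "\<dots> = (\<integral>x. 1 \<partial>s) - (\<integral>x. tt k * ph k x \<partial>s)"
      by (rule Bochner_Integration.integral_diff) (use phi in auto)
    also have "\<dots> = 1 - tt k * (\<integral>x. ph k x \<partial>s)" by (simp add: prob_space)
    finally show ?thesis by (simp add: g_def ph_def)
  qed
qed


lemma pmf_sums1: "(\<lambda>n. pmf rho (n::nat)) sums 1"
proof -
  have "(\<integral>\<^sup>+x. 1 \<partial>measure_pmf rho) = \<integral>\<^sup>+x. ennreal (pmf rho x) * 1 \<partial>count_space UNIV"
    by (rule nn_integral_measure_pmf)
  then have "(\<Sum>n. ennreal (pmf rho n)) = 1"
    by (simp add: nn_integral_count_space_nat measure_pmf.emeasure_space_1)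
  moreover have "(\<Sum>n. ennreal (pmf rho n)) = ennreal (\<Sum>n. pmf rho n)"
    by (rule suminf_ennreal2[OF _ pmf_summable]) simp
  ultimately have "(\<Sum>n. pmf rho n) = 1" by simp
  then show ?thesis using pmf_summable by (simp add: sums_iff)
qed

lemma int_h:
  assumes "prob_space M" "B \<in> sets M"
  shows "(\<integral>y. 1 - t * indicator B y \<partial>M) = 1 - t * measure M B"
proof -
  interpret prob_space M by fact
  have i: "integrable M (\<lambda>y. t * indicator B y :: real)"
    using assms(2) by (intro integrable_mult_right) (simp add: integrable_indicator_iff emeasure_eq_measure)
  have "(\<integral>y. 1 - t * indicator B y \<partial>M) = (\<integral>y. 1 \<partial>M) - (\<integral>y. t * indicator B y \<partial>M)"
    by (rule Bochner_Integration.integral_diff) (use i in auto)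
  also have "\<dots> = 1 - t * measure M B"
    using assms(2) by (simp add: prob_space sets.Int_space_eq2)
  finally show ?thesis .
qed

lemma intensity_main:
  fixes ps pb lam :: "'a \<Rightarrow> real"
  assumes s_prob: "prob_space s" and s_sets: "sets s = sets XM"
    and prev: "Pprev = iid_law XM rho s"
    and ps_meas: "ps \<in> borel_measurable XM" and ps_range: "\<forall>x\<in>space XM. 0 \<le> ps x \<and> ps x \<le> 1"
    and fs_kernel: "fs \<in> XM \<rightarrow>\<^sub>M prob_algebra XM"
    and pb_meas: "pb \<in> borel_measurable XM" and pb_range: "\<forall>x\<in>space XM. 0 \<le> pb x \<and> pb x \<le> 1"
    and lam_meas: "lam \<in> borel_measurable XM" and lam_nonneg: "\<forall>x\<in>space XM. 0 \<le> lam x"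
    and sb_kernel: "sb \<in> XM \<rightarrow>\<^sub>M prob_algebra XM"
    and pred_pp: "point_process XM Ppred"
    and pred_pgfl: "\<forall>h \<in> borel_measurable XM. (\<forall>x\<in>space XM. \<bar>h x\<bar> \<le> 1) \<longrightarrow>
        pgfl Ppred h =
        pgfl Pprev (\<lambda>x. pgfl (bernoulli_law XM (ps x) (fs x)) h
                        * pgfl (zip_law XM (pb x) (lam x) (sb x)) h)"
    and B: "B \<in> sets XM"
  shows "intensity Ppred B =
            (\<integral>\<^sup>+x. ennreal (ps x * measure (fs x) B + pb x * lam x * measure (sb x) B)
               \<partial>(scale_measure (\<Sum>m. ennreal (real m * pmf rho m)) s))"
proof -
  have sp: "space s = space XM" using s_sets by (rule sets_eq_imp_space_eq)
  have fBm: "(\<lambda>x. measure (fs x) B) \<in> borel_measurable XM"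
    by (rule measurable_compose[OF measurable_prob_algebraD[OF fs_kernel] measurable_measure_subprob_algebra[OF B]])
  have sBm: "(\<lambda>x. measure (sb x) B) \<in> borel_measurable XM"
    by (rule measurable_compose[OF measurable_prob_algebraD[OF sb_kernel] measurable_measure_subprob_algebra[OF B]])
  note [measurable] = ps_meas pb_meas lam_meas fBm sBm
  define al where "al x = ps x * measure (fs x) B" for x
  define be where "be x = lam x * measure (sb x) B" for x
  have alm: "al \<in> borel_measurable XM" unfolding al_def by measurable
  have bem: "be \<in> borel_measurable XM" unfolding be_def by measurable
  have alm': "al \<in> borel_measurable s" and bem': "be \<in> borel_measurable s" and pbm': "pb \<in> borel_measurable s"
    using alm bem pb_meas unfolding measurable_cong_sets[OF s_sets refl] by auto
  have mf: "0 \<le> measure (fs x) B" "measure (fs x) B \<le> 1" if "x \<in> space XM" for x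
    using kernel_at[OF fs_kernel that] by (auto intro: prob_space.prob_le_1)
  have mb: "0 \<le> measure (sb x) B" "measure (sb x) B \<le> 1" if "x \<in> space XM" for x
    using kernel_at[OF sb_kernel that] by (auto intro: prob_space.prob_le_1)
  have rng: "0 \<le> al x \<and> al x \<le> 1 \<and> 0 \<le> pb x \<and> pb x \<le> 1 \<and> 0 \<le> be x" if "x \<in> space s" for x
  proof -
    have x: "x \<in> space XM" using that sp by simp
    have "ps x * measure (fs x) B \<le> 1" using ps_range x mf[OF x] by (simp add: mult_le_one)
    then show ?thesis using ps_range pb_range lam_nonneg x mf[OF x] mb[OF x] by (simp add: al_def be_def)
  qed
  note AC = Ac_props[OF s_prob alm' pbm' bem' rng]
  define A where "A k = (\<integral>x. phiR (al x) (pb x) (be x) k \<partial>s)" for k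
  define c where "c k = (\<integral>x. gR (al x) (pb x) (be x) k \<partial>s)" for k
  have step: "(\<integral>\<^sup>+M. ennreal (\<Sum>i<cnt B M. (1 - tt k) ^ i) \<partial>Ppred)
      = (\<Sum>m. ennreal (pmf rho m * A k * (\<Sum>i<m. c k ^ i)))" for k
  proof -
    define h where "h x = 1 - tt k * indicator B x" for x
    have hm: "h \<in> borel_measurable XM" unfolding h_def using B by measurable
    have hb: "0 \<le> h x \<and> h x \<le> 1" for x using tt_pos[of k] tt_le[of k] by (auto simp: h_def indicator_def)
    have t1: "0 < tt k" "tt k \<le> 1" using tt_pos[of k] tt_le[of k] by auto
    have gm: "(\<lambda>x. gR (al x) (pb x) (be x) k) \<in> borel_measurable XM"
      unfolding gR_def uR_def using alm bem by measurable
    have gb: "0 \<le> gR (al x) (pb x) (be x) k \<and> gR (al x) (pb x) (be x) k \<le> 1" if "x \<in> space XM" for x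
      using gR_bnd[of "al x" "pb x" "be x" k] rng[of x] that sp by auto
    have "pgfl Ppred h = pgfl Pprev (\<lambda>x. pgfl (bernoulli_law XM (ps x) (fs x)) h
                        * pgfl (zip_law XM (pb x) (lam x) (sb x)) h)"
    proof -
      have "\<forall>x\<in>space XM. \<bar>h x\<bar> \<le> 1" using hb by (simp add: abs_of_nonneg)
      then show ?thesis using pred_pgfl hm by blast
    qed
    also have "\<dots> = pgfl Pprev (\<lambda>x. (1 - ps x + ps x * (\<integral>y. h y \<partial>fs x)) *
          (1 - pb x + pb x * exp (- lam x) * exp (lam x * (\<integral>y. h y \<partial>sb x))))"
      unfolding prev by (rule pgfl_pred_formula[OF s_prob s_sets ps_meas ps_range fs_kernel pb_meas pb_range
        lam_meas lam_nonneg sb_kernel hm]) (use hb in auto)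
    also have "\<dots> = pgfl Pprev (\<lambda>x. gR (al x) (pb x) (be x) k)"
      unfolding prev
    proof (rule pgfl_cong[OF sets_iid[OF s_prob s_sets]])
      fix x assume x: "x \<in> space XM"
      have f: "(\<integral>y. h y \<partial>fs x) = 1 - tt k * measure (fs x) B"
        unfolding h_def using kernel_at[OF fs_kernel x] B by (intro int_h) auto
      have g: "(\<integral>y. h y \<partial>sb x) = 1 - tt k * measure (sb x) B"
        unfolding h_def using kernel_at[OF sb_kernel x] B by (intro int_h) auto
      have e: "exp (- lam x) * exp (lam x * (1 - tt k * measure (sb x) B)) = exp (- (tt k * be x))"
        by (simp add: be_def exp_add[symmetric] algebra_simps)
      show "(1 - ps x + ps x * (\<integral>y. h y \<partial>fs x)) *
          (1 - pb x + pb x * exp (- lam x) * exp (lam x * (\<integral>y. h y \<partial>sb x))) = gR (al x) (pb x) (be x) k"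
        unfolding f g gR_def uR_def al_def mult.assoc e by (simp add: algebra_simps)
    qed
    also have "\<dots> = (\<Sum>m. pmf rho m * c k ^ m)"
      unfolding prev c_def by (rule pgfl_iid_real(2)[OF s_prob s_sets gm]) (use gb in auto)
    finally have pg: "pgfl Ppred h = (\<Sum>m. pmf rho m * c k ^ m)" .
    have "(\<integral>\<^sup>+M. ennreal (\<Sum>i<cnt B M. (1 - tt k) ^ i) \<partial>Ppred) = ennreal ((1 - pgfl Ppred h) / tt k)"
      unfolding h_def by (rule lhs_eq[OF pred_pp B t1])
    also have "\<dots> = (\<Sum>m. ennreal (pmf rho m * A k * (\<Sum>i<m. c k ^ i)))"
      unfolding pg by (rule rhs_series[OF pmf_sums1 pmf_nonneg]) (use AC t1 in \<open>auto simp: A_def c_def\<close>)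
    finally show ?thesis .
  qed
  have "intensity Ppred B = (SUP k. \<Sum>m. ennreal (pmf rho m * A k * (\<Sum>i<m. c k ^ i)))"
    unfolding lhs_sup[OF pred_pp B, symmetric] step ..
  also have "\<dots> = (\<Sum>m. ennreal (real m * pmf rho m)) * (\<integral>\<^sup>+x. ennreal (al x + pb x * be x) \<partial>s)"
    by (rule rhs_sup[OF pmf_nonneg]) (use AC in \<open>auto simp: A_def c_def\<close>)
  also have "\<dots> = (\<integral>\<^sup>+x. ennreal (ps x * measure (fs x) B + pb x * lam x * measure (sb x) B)
               \<partial>(scale_measure (\<Sum>m. ennreal (real m * pmf rho m)) s))"
  proof -
    have m: "(\<lambda>x. ennreal (ps x * measure (fs x) B + pb x * lam x * measure (sb x) B)) \<in> borel_measurable s"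
      unfolding measurable_cong_sets[OF s_sets refl] by measurable
    show ?thesis unfolding nn_integral_scale_measure[OF m]
      by (simp add: al_def be_def mult.commute mult.left_commute)
  qed
  finally show ?thesis .
qed


theorem theorem1:
  fixes X :: "'a::euclidean_space set"
    and rho :: "nat pmf"
    and s :: "'a measure"
    and ps pb lam :: "'a \<Rightarrow> real"
    and fs sb :: "'a \<Rightarrow> 'a measure"
    and Pprev Ppred :: "'a multiset measure"
    and XM :: "'a measure"
    and b :: "nat \<Rightarrow> real"
  defines "XM \<equiv> restrict_space borel X"
  defines "b \<equiv> (\<lambda>i. if i = 0 then
              (\<integral>x. (1 - ps x) * ((1 - pb x) + pb x * exp (- lam x)) \<partial>s)
            else if i = 1 then
              (\<integral>x. (1 - ps x) * pb x * exp (- lam x) * lam x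
                    + ps x * ((1 - pb x) + pb x * exp (- lam x)) \<partial>s)
            else
              (\<integral>x. pb x * lam x ^ (i - 1) * exp (- lam x)
                    * ((1 - ps x) * lam x + real i * ps x) \<partial>s))"
  assumes s_prob: "prob_space s" and s_sets: "sets s = sets XM"
    and prev: "Pprev = iid_law XM rho s"
    and ps_meas: "ps \<in> borel_measurable XM" and ps_range: "\<forall>x\<in>X. 0 \<le> ps x \<and> ps x \<le> 1"
    and fs_kernel: "fs \<in> XM \<rightarrow>\<^sub>M prob_algebra XM"
    and pb_meas: "pb \<in> borel_measurable XM" and pb_range: "\<forall>x\<in>X. 0 \<le> pb x \<and> pb x \<le> 1"
    and lam_meas: "lam \<in> borel_measurable XM" and lam_nonneg: "\<forall>x\<in>X. 0 \<le> lam x"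
    and sb_kernel: "sb \<in> XM \<rightarrow>\<^sub>M prob_algebra XM"
    and pred_pp: "point_process XM Ppred"
    and pred_pgfl: "\<forall>h \<in> borel_measurable XM. (\<forall>x\<in>X. \<bar>h x\<bar> \<le> 1) \<longrightarrow>
        pgfl Ppred h =
        pgfl Pprev (\<lambda>x. pgfl (bernoulli_law XM (ps x) (fs x)) h
                        * pgfl (zip_law XM (pb x) (lam x) (sb x)) h)"
  shows "(\<forall>B \<in> sets XM. intensity Ppred B =
            (\<integral>\<^sup>+x. ennreal (ps x * measure (fs x) B + pb x * lam x * measure (sb x) B)
               \<partial>(scale_measure (\<Sum>m. ennreal (real m * pmf rho m)) s)))
       \<and> (\<forall>n. card_dist Ppred n =
            (\<Sum>j\<le>n. bell_partial n j b *
               (\<Sum>m. if j \<le> m then fact m / (fact n * fact (m - j)) * pmf rho m * b 0 ^ (m - j)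
                     else 0)))"
proof -
  have spX: "space XM = X" unfolding XM_def by (simp add: space_restrict_space)
  have ps_range': "\<forall>x\<in>space XM. 0 \<le> ps x \<and> ps x \<le> 1" using ps_range spX by simp
  have pb_range': "\<forall>x\<in>space XM. 0 \<le> pb x \<and> pb x \<le> 1" using pb_range spX by simp
  have lam_nonneg': "\<forall>x\<in>space XM. 0 \<le> lam x" using lam_nonneg spX by simp
  have pred_pgfl': "\<forall>h \<in> borel_measurable XM. (\<forall>x\<in>space XM. \<bar>h x\<bar> \<le> 1) \<longrightarrow>
        pgfl Ppred h =
        pgfl Pprev (\<lambda>x. pgfl (bernoulli_law XM (ps x) (fs x)) h
                        * pgfl (zip_law XM (pb x) (lam x) (sb x)) h)"
    using pred_pgfl spX by simp
  have b_eq: "b = (\<lambda>i. \<integral>x. beta (ps x) (pb x) (lam x) i \<partial>s)"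
  proof
    fix i
    show "b i = (\<integral>x. beta (ps x) (pb x) (lam x) i \<partial>s)"
      unfolding b_def beta_def by (cases "i = 0"; cases "i = 1") auto
  qed
  show ?thesis
  proof (intro conjI ballI allI)
    fix B assume B: "B \<in> sets XM"
    show "intensity Ppred B =
            (\<integral>\<^sup>+x. ennreal (ps x * measure (fs x) B + pb x * lam x * measure (sb x) B)
               \<partial>(scale_measure (\<Sum>m. ennreal (real m * pmf rho m)) s))"
      by (rule intensity_main[OF s_prob s_sets prev ps_meas ps_range' fs_kernel pb_meas pb_range'
            lam_meas lam_nonneg' sb_kernel pred_pp pred_pgfl' B])
  next
    fix n
    show "card_dist Ppred n =
            (\<Sum>j\<le>n. bell_partial n j b *
               (\<Sum>m. if j \<le> m then fact m / (fact n * fact (m - j)) * pmf rho m * b 0 ^ (m - j)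
                     else 0))"
      unfolding b_eq
      by (rule card_main[OF s_prob s_sets prev ps_meas ps_range' fs_kernel pb_meas pb_range'
            lam_meas lam_nonneg' sb_kernel pred_pp pred_pgfl'])
  qed
qed


end
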